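(* Let $\ell\ge2$, $\rho\in(-\frac{1}{\ell-1},1)$, $m\in\{2,\dots,\ell\}$ and $\gamma>0$. Let $X=(X_1,\dots,X_\ell)^T$ be zero-mean Gaussian with covariance matrix having all diagonal entries $1$ and all off-diagonal entries $\rho$. Let $M$ be the $m\times m$ matrix with diagonal entries $m-1$ and off-diagonal entries $-1$. For each $m$-subset $\mathcal{S}=\{i_1<\dots<i_m\}$ of $\{1,\dots,\ell\}$ define \[ (U^-_{\mathcal{S},1}(\gamma),\dots,U^-_{\mathcal{S},m}(\gamma))^T=M(X_{i_1},\dots,X_{i_m})^T+\sqrt{\gamma}\,(N^-_{\mathcal{S},1},\dots,N^-_{\mathcal{S},m})^T, \] where each $(N^-_{\mathcal{S},1},\dots,N^-_{\mathcal{S},m})^T$ is a zero-mean Gaussian vector with covariance matrix $M$, and $X$ and these noise vectors (over all $m$-subsets $\mathcal{S}$) are mutually independent. Then the error covariance matrix $\mathbb{E}[(X-\mathbb{E}[X|\omega])(X-\mathbb{E}[X|\omega])^T]$, where $\omega=(U^-_{\mathcal{S},j}(\gamma): j=1,\dots,m,\ |\mathcal{S}|=m)$, has all diagonal entries equal to \[ d^-(\gamma)= 1-\frac{\binom{\ell-2}{m-2}(\ell-1)(1-\rho)^2}{\gamma+\binom{\ell-2}{m-2}\ell(1-\rho)} \] and all off-diagonal entries equal to \[ \theta^-(\gamma)=\rho+\frac{\binom{\ell-2}{m-2}(1-\rho)^2}{\gamma+\binom{\ell-2}{m-2}\ell(1-\rho)}. \] *)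

theory Defs
  imports "HOL-Probability.Probability"
begin

text \<open>A random vector Y (components Y w i, i in I, I finite) is zero-mean Gaussian with
  covariance matrix C (possibly singular), defined via its characteristic function:
  E[exp(i * sum_i t_i Y_i)] = exp(-(t^T C t)/2) for all t.\<close>
definition gaussian_vec ::
  "'a measure \<Rightarrow> nat set \<Rightarrow> ('a \<Rightarrow> nat \<Rightarrow> real) \<Rightarrow> (nat \<Rightarrow> nat \<Rightarrow> real) \<Rightarrow> bool" where
  "gaussian_vec P I Y C \<longleftrightarrow>
     (\<forall>i\<in>I. (\<lambda>w. Y w i) \<in> borel_measurable P) \<and>
     (\<forall>t::nat \<Rightarrow> real.
        (CLINT w|P. iexp (\<Sum>i\<in>I. t i * Y w i))
          = complex_of_real (exp (- (\<Sum>i\<in>I. \<Sum>j\<in>I. t i * C i j * t j) / 2)))"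

definition gen_sigma :: "'a measure \<Rightarrow> ('b \<Rightarrow> 'a \<Rightarrow> real) \<Rightarrow> 'b set \<Rightarrow> 'a measure" where
  "gen_sigma P f K =
     sigma (space P) {f k -` B \<inter> space P | k B. k \<in> K \<and> B \<in> sets (borel :: real measure)}"

definition Mmat :: "nat \<Rightarrow> nat \<Rightarrow> nat \<Rightarrow> real" where
  "Mmat m j k = (if j = k then real m - 1 else -1)"

definition elem_of :: "nat set \<Rightarrow> nat \<Rightarrow> nat" where
  "elem_of S j = sorted_list_of_set S ! j"

end

theory Submission
  imports Defs
begin



lemma bool_prod_integral:
  fixes Q :: "'q measure" and h :: "'q \<times> bool \<Rightarrow> 'b::{banach,second_countable_topology}"
  assumes Q: "prob_space Q" and hm: "h \<in> borel_measurable (Q \<Otimes>\<^sub>M count_space UNIV)"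
    and hb: "\<And>z. norm (h z) \<le> C"
  shows "integral\<^sup>L (Q \<Otimes>\<^sub>M count_space UNIV) h = (\<integral>x. h (x,True) \<partial>Q) + (\<integral>x. h (x,False) \<partial>Q)"
proof -
  interpret Q: prob_space Q by fact
  interpret C: finite_measure "count_space (UNIV::bool set)" by (rule finite_measure_count_space) simp
  interpret pair_sigma_finite Q "count_space (UNIV::bool set)" ..
  interpret F: finite_measure "Q \<Otimes>\<^sub>M count_space (UNIV::bool set)"
    by (rule finite_measure_pair_measure) unfold_locales
  have int: "integrable (Q \<Otimes>\<^sub>M count_space UNIV) h"
    by (rule F.integrable_const_bound[where B=C]) (use hb hm in auto)
  have "integral\<^sup>L (Q \<Otimes>\<^sub>M count_space UNIV) h = (\<integral>x. (\<integral>y. h (x, y) \<partial>count_space UNIV) \<partial>Q)"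
    using integral_fst'[OF int] by simp
  also have "\<dots> = (\<integral>x. h (x,True) + h (x,False) \<partial>Q)"
    by (simp add: lebesgue_integral_count_space_finite UNIV_bool add.commute)
  also have "\<dots> = (\<integral>x. h (x,True) \<partial>Q) + (\<integral>x. h (x,False) \<partial>Q)"
  proof (rule Bochner_Integration.integral_add)
    have m1: "(\<lambda>x. h (x,True)) \<in> borel_measurable Q" using hm by measurable
    have m2: "(\<lambda>x. h (x,False)) \<in> borel_measurable Q" using hm by measurable
    show "integrable Q (\<lambda>x. h (x, True))" by (rule Q.integrable_const_bound[where B=C]) (use hb m1 in auto)
    show "integrable Q (\<lambda>x. h (x, False))" by (rule Q.integrable_const_bound[where B=C]) (use hb m2 in auto)
  qed
  finally show ?thesis .
qed



lemma levy_weighted: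
  fixes R :: "'r measure" and F WL WR :: "'r \<Rightarrow> real"
  assumes R: "finite_measure R"
    and [measurable]: "F \<in> borel_measurable R" "WL \<in> borel_measurable R" "WR \<in> borel_measurable R"
    and p1: "\<And>z. 0 \<le> WL z" and p2: "\<And>z. 0 \<le> WR z" and b1: "\<And>z. WL z \<le> C" and b2: "\<And>z. WR z \<le> C"
    and ch: "\<And>s. (\<integral>z. WL z *\<^sub>R iexp (s * F z) \<partial>R) = (\<integral>z. WR z *\<^sub>R iexp (s * F z) \<partial>R)"
    and B: "B \<in> sets borel"
  shows "(\<integral>z. WL z * indicator B (F z) \<partial>R) = (\<integral>z. WR z * indicator B (F z) \<partial>R)"
proof -
  interpret R: finite_measure R by fact
  note Bm[measurable] = B
  have C0: "0 \<le> C" using p1 b1 order_trans by blast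
  have intL: "integrable R WL" by (rule R.integrable_const_bound[where B=C]) (use p1 b1 in auto)
  have intR: "integrable R WR" by (rule R.integrable_const_bound[where B=C]) (use p2 b2 in auto)
  have intLB: "integrable R (\<lambda>z. WL z * indicator B (F z))"
    by (rule R.integrable_const_bound[where B=C]) (use p1 b1 B C0 in \<open>auto simp: indicator_def\<close>)
  have intRB: "integrable R (\<lambda>z. WR z * indicator B (F z))"
    by (rule R.integrable_const_bound[where B=C]) (use p2 b2 B C0 in \<open>auto simp: indicator_def\<close>)
  define c where "c = (\<integral>z. WL z \<partial>R)"
  have c2: "c = (\<integral>z. WR z \<partial>R)"
  proof -
    have "complex_of_real (\<integral>z. WL z \<partial>R) = (\<integral>z. WL z *\<^sub>R iexp (0 * F z) \<partial>R)"
      by (simp add: integral_scaleR_left[symmetric] scaleR_conv_of_real)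
    also have "\<dots> = (\<integral>z. WR z *\<^sub>R iexp (0 * F z) \<partial>R)" by (rule ch)
    also have "\<dots> = complex_of_real (\<integral>z. WR z \<partial>R)"
      by (simp add: integral_scaleR_left[symmetric] scaleR_conv_of_real)
    finally show ?thesis unfolding c_def by simp
  qed
  have c0: "c \<ge> 0" unfolding c_def using p1 by simp
  show ?thesis
  proof (cases "c = 0")
    case True
    have "AE z in R. WL z = 0" using True intL p1 unfolding c_def
      by (subst integral_nonneg_eq_0_iff_AE[symmetric]) auto
    then have 1: "(\<integral>z. WL z * indicator B (F z) \<partial>R) = 0"
      by (subst integral_cong_AE[where g="\<lambda>_. 0"]) auto
    have "AE z in R. WR z = 0" using True intR p2 unfolding c2
      by (subst integral_nonneg_eq_0_iff_AE[symmetric]) auto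
    then have 2: "(\<integral>z. WR z * indicator B (F z) \<partial>R) = 0"
      by (subst integral_cong_AE[where g="\<lambda>_. 0"]) auto
    show ?thesis using 1 2 by simp
  next
    case False
    then have cpos: "c > 0" using c0 by simp
    define M1 where "M1 = distr (density R (\<lambda>z. ennreal (WL z / c))) borel F"
    define M2 where "M2 = distr (density R (\<lambda>z. ennreal (WR z / c))) borel F"
    have d1: "prob_space (density R (\<lambda>z. ennreal (WL z / c)))"
    proof
      have "emeasure (density R (\<lambda>z. ennreal (WL z / c))) (space R) = (\<integral>\<^sup>+z. ennreal (WL z / c) \<partial>R)"
        by (simp add: emeasure_density)
      also have "\<dots> = ennreal (\<integral>z. WL z / c \<partial>R)"
        by (rule nn_integral_eq_integral) (use intL p1 c0 in auto)
      also have "\<dots> = 1" using cpos unfolding c_def by simp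
      finally show "emeasure (density R (\<lambda>z. ennreal (WL z / c))) (space (density R (\<lambda>z. ennreal (WL z / c)))) = 1"
        by simp
    qed
    have d2: "prob_space (density R (\<lambda>z. ennreal (WR z / c)))"
    proof
      have "emeasure (density R (\<lambda>z. ennreal (WR z / c))) (space R) = (\<integral>\<^sup>+z. ennreal (WR z / c) \<partial>R)"
        by (simp add: emeasure_density)
      also have "\<dots> = ennreal (\<integral>z. WR z / c \<partial>R)"
        by (rule nn_integral_eq_integral) (use intR p2 c0 in auto)
      also have "\<dots> = 1" using cpos unfolding c2 by simp
      finally show "emeasure (density R (\<lambda>z. ennreal (WR z / c))) (space (density R (\<lambda>z. ennreal (WR z / c)))) = 1"
        by simp
    qed
    have rd1: "real_distribution M1" unfolding M1_def real_distribution_def real_distribution_axioms_def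
      using prob_space.prob_space_distr[OF d1, of F borel] by simp
    have rd2: "real_distribution M2" unfolding M2_def real_distribution_def real_distribution_axioms_def
      using prob_space.prob_space_distr[OF d2, of F borel] by simp
    have I1: "integral\<^sup>L M1 g = (\<integral>z. (WL z / c) *\<^sub>R g (F z) \<partial>R)"
      if [measurable]: "g \<in> borel_measurable borel" for g :: "real \<Rightarrow> complex"
      unfolding M1_def using c0 p1
      by (subst integral_distr) (auto simp: integral_density)
    have I1r: "integral\<^sup>L M1 g = (\<integral>z. (WL z / c) *\<^sub>R g (F z) \<partial>R)"
      if [measurable]: "g \<in> borel_measurable borel" for g :: "real \<Rightarrow> real"
      unfolding M1_def using c0 p1
      by (subst integral_distr) (auto simp: integral_density)
    have I2: "integral\<^sup>L M2 g = (\<integral>z. (WR z / c) *\<^sub>R g (F z) \<partial>R)"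
      if [measurable]: "g \<in> borel_measurable borel" for g :: "real \<Rightarrow> complex"
      unfolding M2_def using c0 p2
      by (subst integral_distr) (auto simp: integral_density)
    have I2r: "integral\<^sup>L M2 g = (\<integral>z. (WR z / c) *\<^sub>R g (F z) \<partial>R)"
      if [measurable]: "g \<in> borel_measurable borel" for g :: "real \<Rightarrow> real"
      unfolding M2_def using c0 p2
      by (subst integral_distr) (auto simp: integral_density)
    have "char M1 = char M2"
    proof
      fix s
      have "char M1 s = (\<integral>z. (WL z / c) *\<^sub>R iexp (s * F z) \<partial>R)"
        unfolding char_def by (rule I1) simp
      also have "\<dots> = (1/c) *\<^sub>R (\<integral>z. WL z *\<^sub>R iexp (s * F z) \<partial>R)"
        by (simp add: divide_inverse mult.commute[of _ "inverse c"] flip: scaleR_scaleR)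
      also have "\<dots> = (1/c) *\<^sub>R (\<integral>z. WR z *\<^sub>R iexp (s * F z) \<partial>R)" by (simp only: ch)
      also have "\<dots> = (\<integral>z. (WR z / c) *\<^sub>R iexp (s * F z) \<partial>R)"
        by (simp add: divide_inverse mult.commute[of _ "inverse c"] flip: scaleR_scaleR)
      also have "\<dots> = char M2 s" unfolding char_def by (rule I2[symmetric]) simp
      finally show "char M1 s = char M2 s" .
    qed
    then have "M1 = M2" using Levy_uniqueness rd1 rd2 by blast
    then have "(\<integral>x. indicator B x \<partial>M1) = (\<integral>x. (indicator B x :: real) \<partial>M2)" by simp
    then have "(\<integral>z. (WL z / c) *\<^sub>R indicator B (F z) \<partial>R) = (\<integral>z. (WR z / c) *\<^sub>R (indicator B (F z)::real) \<partial>R)"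
    proof -
      have m: "indicator B \<in> borel_measurable (borel::real measure)" using B by simp
      from \<open>(\<integral>x. indicator B x \<partial>M1) = (\<integral>x. (indicator B x :: real) \<partial>M2)\<close> I1r[OF m] I2r[OF m]
      show ?thesis by (rule box_equals)
    qed
    then have "(\<integral>z. WL z * indicator B (F z) \<partial>R) / c = (\<integral>z. WR z * indicator B (F z) \<partial>R) / c"
      by (simp add: divide_inverse mult.commute[of _ "inverse c"] mult.assoc)
    then show ?thesis using cpos by simp
  qed
qed


lemma uniq_real:
  fixes Q :: "'q measure" and f1 f2 g1 g2 :: "'q \<Rightarrow> real"
  assumes Q: "prob_space Q"
    and [measurable]: "f1 \<in> borel_measurable Q" "f2 \<in> borel_measurable Q" "g1 \<in> borel_measurable Q" "g2 \<in> borel_measurable Q"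
    and b1: "\<And>x. \<bar>g1 x\<bar> \<le> C" and b2: "\<And>x. \<bar>g2 x\<bar> \<le> C"
    and ch: "\<And>s. (\<integral>x. g1 x *\<^sub>R iexp (s * f1 x) \<partial>Q) = (\<integral>x. g2 x *\<^sub>R iexp (s * f2 x) \<partial>Q)"
    and B: "B \<in> sets borel"
  shows "(\<integral>x. g1 x * indicator B (f1 x) \<partial>Q) = (\<integral>x. g2 x * indicator B (f2 x) \<partial>Q)"
proof -
  interpret Q: prob_space Q by fact
  note Bm[measurable] = B
  have C0: "0 \<le> C" using b1 abs_ge_zero order_trans by blast
  define R where "R = Q \<Otimes>\<^sub>M count_space (UNIV::bool set)"
  interpret C: finite_measure "count_space (UNIV::bool set)" by (rule finite_measure_count_space) simp
  interpret RF: finite_measure R unfolding R_def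
    by (rule finite_measure_pair_measure) unfold_locales
  define F where "F z = (if snd z then f1 (fst z) else f2 (fst z))" for z
  define WL where "WL z = (if snd z then max (g1 (fst z)) 0 else max (- g2 (fst z)) 0)" for z
  define WR where "WR z = (if snd z then max (- g1 (fst z)) 0 else max (g2 (fst z)) 0)" for z
  have [measurable]: "F \<in> borel_measurable R" "WL \<in> borel_measurable R" "WR \<in> borel_measurable R"
    unfolding F_def WL_def WR_def R_def by measurable
  have K: "(\<integral>z. W z *\<^sub>R \<phi> (F z) \<partial>R) = (\<integral>x. W (x,True) *\<^sub>R \<phi> (f1 x) \<partial>Q) + (\<integral>x. W (x,False) *\<^sub>R \<phi> (f2 x) \<partial>Q)"
    if [measurable]: "W \<in> borel_measurable R" "\<phi> \<in> borel_measurable borel" and wb: "\<And>z. \<bar>W z\<bar> \<le> C2" and pb: "\<And>x. norm (\<phi> x) \<le> D"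
    for W :: "'q \<times> bool \<Rightarrow> real" and \<phi> :: "real \<Rightarrow> 'b::{banach,second_countable_topology}" and C2 D
  proof -
    have "(\<integral>z. W z *\<^sub>R \<phi> (F z) \<partial>R) = (\<integral>x. W (x,True) *\<^sub>R \<phi> (F (x,True)) \<partial>Q) + (\<integral>x. W (x,False) *\<^sub>R \<phi> (F (x,False)) \<partial>Q)"
      unfolding R_def
    proof (rule bool_prod_integral[OF Q, where C="C2 * D"])
      have "(\<lambda>z. W z *\<^sub>R \<phi> (F z)) \<in> borel_measurable R" by measurable
      then show "(\<lambda>z. W z *\<^sub>R \<phi> (F z)) \<in> borel_measurable (Q \<Otimes>\<^sub>M count_space UNIV)"
        unfolding R_def .
      show "norm (W z *\<^sub>R \<phi> (F z)) \<le> C2 * D" for z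
        using wb[of z] pb[of "F z"] by (simp add: mult_mono')
    qed
    then show ?thesis by (simp add: F_def)
  qed
  have wbL: "\<bar>WL z\<bar> \<le> C" for z using b1[of "fst z"] b2[of "fst z"] by (auto simp: WL_def)
  have wbR: "\<bar>WR z\<bar> \<le> C" for z using b1[of "fst z"] b2[of "fst z"] by (auto simp: WR_def)
  have wbD: "\<bar>WL z - WR z\<bar> \<le> 2*C" for z using wbL[of z] wbR[of z] by linarith
  have dT: "WL (x,True) - WR (x,True) = g1 x" for x by (simp add: WL_def WR_def)
  have dF: "WL (x,False) - WR (x,False) = - g2 x" for x by (simp add: WL_def WR_def)
  have intg: "integrable R (\<lambda>z. W z *\<^sub>R \<phi> (F z))"
    if [measurable]: "W \<in> borel_measurable R" "\<phi> \<in> borel_measurable borel" and wb: "\<And>z. \<bar>W z\<bar> \<le> C2" and pb: "\<And>x. norm (\<phi> x) \<le> D"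
    for W :: "'q \<times> bool \<Rightarrow> real" and \<phi> :: "real \<Rightarrow> 'b::{banach,second_countable_topology}" and C2 D
    by (rule RF.integrable_const_bound[where B="C2*D"]) (use wb pb in \<open>auto simp: mult_mono'\<close>)
  have chR: "(\<integral>z. WL z *\<^sub>R iexp (s * F z) \<partial>R) = (\<integral>z. WR z *\<^sub>R iexp (s * F z) \<partial>R)" for s
  proof -
    have m: "(\<lambda>x. iexp (s * x)) \<in> borel_measurable borel" by measurable
    have nb: "norm (iexp (s * x)) \<le> 1" for x by simp
    have "(\<integral>z. WL z *\<^sub>R iexp (s * F z) \<partial>R) - (\<integral>z. WR z *\<^sub>R iexp (s * F z) \<partial>R)
        = (\<integral>z. (WL z - WR z) *\<^sub>R iexp (s * F z) \<partial>R)"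
      using Bochner_Integration.integral_diff[OF intg[OF _ m wbL nb] intg[OF _ m wbR nb]]
      by (simp add: scaleR_diff_left)
    also have "\<dots> = (\<integral>x. g1 x *\<^sub>R iexp (s * f1 x) \<partial>Q) + (\<integral>x. (- g2 x) *\<^sub>R iexp (s * f2 x) \<partial>Q)"
      using K[of "\<lambda>z. WL z - WR z", OF _ m wbD nb] by (simp add: dT dF)
    also have "\<dots> = 0" using ch[of s] by simp
    finally show ?thesis by simp
  qed
  have eqB: "(\<integral>z. WL z * indicator B (F z) \<partial>R) = (\<integral>z. WR z * indicator B (F z) \<partial>R)"
  proof (rule levy_weighted[where C=C, OF _ _ _ _ _ _ _ _ chR B])
    show "finite_measure R" by (rule RF.finite_measure_axioms)
    show "WL z \<le> C" for z using wbL[of z] by simp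
    show "WR z \<le> C" for z using wbR[of z] by simp
  qed (measurable, auto simp: WL_def WR_def)
  have m: "(indicator B :: real \<Rightarrow> real) \<in> borel_measurable borel" by measurable
  have nb: "norm (indicator B x :: real) \<le> 1" for x by (simp add: indicator_def)
  have "0 = (\<integral>z. WL z * indicator B (F z) \<partial>R) - (\<integral>z. WR z * indicator B (F z) \<partial>R)" using eqB by simp
  also have "\<dots> = (\<integral>z. (WL z - WR z) *\<^sub>R indicator B (F z) \<partial>R)"
    using Bochner_Integration.integral_diff[OF intg[OF _ m wbL nb] intg[OF _ m wbR nb]]
    by (simp add: left_diff_distrib)
  also have "\<dots> = (\<integral>x. g1 x * indicator B (f1 x) \<partial>Q) + (\<integral>x. (- g2 x) * indicator B (f2 x) \<partial>Q)"
    using K[of "\<lambda>z. WL z - WR z", OF _ m wbD nb] by (simp add: dT dF)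
  finally show ?thesis by simp
qed


lemma borel_measurable_cnj'[measurable]:
  "f \<in> borel_measurable M \<Longrightarrow> (\<lambda>x. cnj (f x)) \<in> borel_measurable M"
  by (rule borel_measurable_continuous_on[where f=cnj]) (auto intro: continuous_intros)

lemma re_id: "Re z *\<^sub>R e = (e * z + e * cnj z) / 2"
  by (simp add: scaleR_conv_of_real distrib_left[symmetric] complex_add_cnj)

lemma im_id: "Im z *\<^sub>R e = (e * z - e * cnj z) / (2 * \<i>)"
  by (simp add: scaleR_conv_of_real right_diff_distrib[symmetric] complex_diff_cnj mult.commute mult.left_commute)

lemma uniq_cplx:
  fixes Q :: "'q measure" and f1 f2 :: "'q \<Rightarrow> real" and h1 h2 :: "'q \<Rightarrow> complex"
  assumes Q: "prob_space Q"
    and [measurable]: "f1 \<in> borel_measurable Q" "f2 \<in> borel_measurable Q" "h1 \<in> borel_measurable Q" "h2 \<in> borel_measurable Q"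
    and b1: "\<And>x. norm (h1 x) \<le> C" and b2: "\<And>x. norm (h2 x) \<le> C"
    and ch: "\<And>s. (\<integral>x. iexp (s * f1 x) * h1 x \<partial>Q) = (\<integral>x. iexp (s * f2 x) * h2 x \<partial>Q)"
    and chc: "\<And>s. (\<integral>x. iexp (s * f1 x) * cnj (h1 x) \<partial>Q) = (\<integral>x. iexp (s * f2 x) * cnj (h2 x) \<partial>Q)"
    and B: "B \<in> sets borel"
  shows "(\<integral>x. indicator B (f1 x) *\<^sub>R h1 x \<partial>Q) = (\<integral>x. indicator B (f2 x) *\<^sub>R h2 x \<partial>Q)"
proof -
  interpret Q: prob_space Q by fact
  note Bm[measurable] = B
  have intc: "integrable Q g" if [measurable]: "g \<in> borel_measurable Q" and "\<And>x. norm (g x) \<le> C"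
    for g :: "'q \<Rightarrow> complex"
    by (rule Q.integrable_const_bound[where B=C]) (use that in auto)
  have intr: "integrable Q g" if [measurable]: "g \<in> borel_measurable Q" and "\<And>x. norm (g x) \<le> D"
    for g :: "'q \<Rightarrow> real" and D
    by (rule Q.integrable_const_bound[where B=D]) (use that in auto)
  have bRe1: "\<bar>Re (h1 x)\<bar> \<le> C" for x using b1[of x] abs_Re_le_cmod order_trans by blast
  have bRe2: "\<bar>Re (h2 x)\<bar> \<le> C" for x using b2[of x] abs_Re_le_cmod order_trans by blast
  have bIm1: "\<bar>Im (h1 x)\<bar> \<le> C" for x using b1[of x] abs_Im_le_cmod order_trans by blast
  have bIm2: "\<bar>Im (h2 x)\<bar> \<le> C" for x using b2[of x] abs_Im_le_cmod order_trans by blast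
  have ReI: "(\<integral>x. Re (h x) *\<^sub>R iexp (s * f x) \<partial>Q) = ((\<integral>x. iexp (s * f x) * h x \<partial>Q) + (\<integral>x. iexp (s * f x) * cnj (h x) \<partial>Q)) / 2"
    if [measurable]: "f \<in> borel_measurable Q" "h \<in> borel_measurable Q" and hb: "\<And>x. norm (h x) \<le> C" for f h s
  proof -
    have "(\<integral>x. Re (h x) *\<^sub>R iexp (s * f x) \<partial>Q) = (\<integral>x. (iexp (s * f x) * h x + iexp (s * f x) * cnj (h x)) / 2 \<partial>Q)"
      by (intro Bochner_Integration.integral_cong refl re_id)
    also have "\<dots> = (\<integral>x. (iexp (s * f x) * h x + iexp (s * f x) * cnj (h x)) \<partial>Q) / 2"
      by (rule integral_divide_zero)
    also have "\<dots> = ((\<integral>x. iexp (s * f x) * h x \<partial>Q) + (\<integral>x. iexp (s * f x) * cnj (h x) \<partial>Q)) / 2"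
      by (subst Bochner_Integration.integral_add) (auto intro!: intc simp: norm_mult hb)
    finally show ?thesis .
  qed
  have ImI: "(\<integral>x. Im (h x) *\<^sub>R iexp (s * f x) \<partial>Q) = ((\<integral>x. iexp (s * f x) * h x \<partial>Q) - (\<integral>x. iexp (s * f x) * cnj (h x) \<partial>Q)) / (2 * \<i>)"
    if [measurable]: "f \<in> borel_measurable Q" "h \<in> borel_measurable Q" and hb: "\<And>x. norm (h x) \<le> C" for f h s
  proof -
    have "(\<integral>x. Im (h x) *\<^sub>R iexp (s * f x) \<partial>Q) = (\<integral>x. (iexp (s * f x) * h x - iexp (s * f x) * cnj (h x)) / (2 * \<i>) \<partial>Q)"
      by (intro Bochner_Integration.integral_cong refl im_id)
    also have "\<dots> = (\<integral>x. (iexp (s * f x) * h x - iexp (s * f x) * cnj (h x)) \<partial>Q) / (2 * \<i>)"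
      by (rule integral_divide_zero)
    also have "\<dots> = ((\<integral>x. iexp (s * f x) * h x \<partial>Q) - (\<integral>x. iexp (s * f x) * cnj (h x) \<partial>Q)) / (2 * \<i>)"
      by (subst Bochner_Integration.integral_diff) (auto intro!: intc simp: norm_mult hb)
    finally show ?thesis .
  qed
  have eRe: "(\<integral>x. Re (h1 x) * indicator B (f1 x) \<partial>Q) = (\<integral>x. Re (h2 x) * indicator B (f2 x) \<partial>Q)"
  proof (rule uniq_real[OF Q _ _ _ _ bRe1 bRe2 _ B])
    fix s
    have r1: "(\<integral>x. Re (h1 x) *\<^sub>R iexp (s * f1 x) \<partial>Q) = ((\<integral>x. iexp (s * f1 x) * h1 x \<partial>Q) + (\<integral>x. iexp (s * f1 x) * cnj (h1 x) \<partial>Q)) / 2"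
      by (rule ReI) (simp_all add: b1)
    have r2: "(\<integral>x. Re (h2 x) *\<^sub>R iexp (s * f2 x) \<partial>Q) = ((\<integral>x. iexp (s * f2 x) * h2 x \<partial>Q) + (\<integral>x. iexp (s * f2 x) * cnj (h2 x) \<partial>Q)) / 2"
      by (rule ReI) (simp_all add: b2)
    show "(\<integral>x. Re (h1 x) *\<^sub>R iexp (s * f1 x) \<partial>Q) = (\<integral>x. Re (h2 x) *\<^sub>R iexp (s * f2 x) \<partial>Q)"
      unfolding r1 r2 ch chc ..
  qed simp_all
  have eIm: "(\<integral>x. Im (h1 x) * indicator B (f1 x) \<partial>Q) = (\<integral>x. Im (h2 x) * indicator B (f2 x) \<partial>Q)"
  proof (rule uniq_real[OF Q _ _ _ _ bIm1 bIm2 _ B])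
    fix s
    have r1: "(\<integral>x. Im (h1 x) *\<^sub>R iexp (s * f1 x) \<partial>Q) = ((\<integral>x. iexp (s * f1 x) * h1 x \<partial>Q) - (\<integral>x. iexp (s * f1 x) * cnj (h1 x) \<partial>Q)) / (2 * \<i>)"
      by (rule ImI) (simp_all add: b1)
    have r2: "(\<integral>x. Im (h2 x) *\<^sub>R iexp (s * f2 x) \<partial>Q) = ((\<integral>x. iexp (s * f2 x) * h2 x \<partial>Q) - (\<integral>x. iexp (s * f2 x) * cnj (h2 x) \<partial>Q)) / (2 * \<i>)"
      by (rule ImI) (simp_all add: b2)
    show "(\<integral>x. Im (h1 x) *\<^sub>R iexp (s * f1 x) \<partial>Q) = (\<integral>x. Im (h2 x) *\<^sub>R iexp (s * f2 x) \<partial>Q)"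
      unfolding r1 r2 ch chc ..
  qed simp_all
  have dec: "(\<integral>x. indicator B (f x) *\<^sub>R h x \<partial>Q) = complex_of_real (\<integral>x. Re (h x) * indicator B (f x) \<partial>Q) + \<i> * complex_of_real (\<integral>x. Im (h x) * indicator B (f x) \<partial>Q)"
    if [measurable]: "f \<in> borel_measurable Q" "h \<in> borel_measurable Q" and hb: "\<And>x. norm (h x) \<le> C" for f h
  proof -
    have bR: "\<bar>Re (h x) * indicator B (f x)\<bar> \<le> C" for x
      using hb[of x] abs_Re_le_cmod[of "h x"] by (auto simp: indicator_def)
    have bI: "\<bar>Im (h x) * indicator B (f x)\<bar> \<le> C" for x
      using hb[of x] abs_Im_le_cmod[of "h x"] by (auto simp: indicator_def)
    have "(\<integral>x. indicator B (f x) *\<^sub>R h x \<partial>Q) = (\<integral>x. complex_of_real (Re (h x) * indicator B (f x)) + \<i> * complex_of_real (Im (h x) * indicator B (f x)) \<partial>Q)"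
      by (rule Bochner_Integration.integral_cong) (auto simp: scaleR_conv_of_real complex_eq_iff)
    also have "\<dots> = (\<integral>x. complex_of_real (Re (h x) * indicator B (f x)) \<partial>Q) + (\<integral>x. \<i> * complex_of_real (Im (h x) * indicator B (f x)) \<partial>Q)"
      by (rule Bochner_Integration.integral_add)
         (auto intro!: intc simp: norm_mult bR bI simp del: of_real_mult)
    also have "\<dots> = complex_of_real (\<integral>x. Re (h x) * indicator B (f x) \<partial>Q) + \<i> * complex_of_real (\<integral>x. Im (h x) * indicator B (f x) \<partial>Q)"
      by (simp del: of_real_mult)
    finally show ?thesis .
  qed
  show ?thesis using dec[of f1 h1] dec[of f2 h2] eRe eIm b1 b2 by simp
qed


lemma uniq_multi_gen:
  fixes Q :: "'q measure" and J :: "'j set" and Z1 Z2 :: "'j \<Rightarrow> 'q \<Rightarrow> real"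
  assumes Q: "prob_space Q" and J: "finite J"
    and m1: "\<And>j. j \<in> J \<Longrightarrow> Z1 j \<in> borel_measurable Q"
    and m2: "\<And>j. j \<in> J \<Longrightarrow> Z2 j \<in> borel_measurable Q"
    and ch: "\<And>t. (\<integral>x. iexp (\<Sum>j\<in>J. t j * Z1 j x) \<partial>Q) = (\<integral>x. iexp (\<Sum>j\<in>J. t j * Z2 j x) \<partial>Q)"
  shows "I \<subseteq> J \<Longrightarrow> (\<forall>j\<in>I. B j \<in> sets borel) \<Longrightarrow>
    (\<integral>x. (\<Prod>j\<in>I. indicator (B j) (Z1 j x)) *\<^sub>R iexp (\<Sum>j\<in>J - I. t j * Z1 j x) \<partial>Q)
  = (\<integral>x. (\<Prod>j\<in>I. indicator (B j) (Z2 j x)) *\<^sub>R iexp (\<Sum>j\<in>J - I. t j * Z2 j x) \<partial>Q)"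
proof (induction I arbitrary: B t rule: infinite_finite_induct)
  case (infinite I)
  then show ?case using J finite_subset by blast
next
  case empty
  then show ?case using ch[of t] by simp
next
  case (insert a I)
  have aJ: "a \<in> J" and IJ: "I \<subseteq> J" using insert.prems by auto
  have Ba[measurable]: "B a \<in> sets borel" using insert.prems by auto
  have BI: "\<forall>j\<in>I. B j \<in> sets borel" using insert.prems by auto
  define R where "R = J - insert a I"
  have JI: "J - I = insert a R" "a \<notin> R" "finite R" using aJ insert.hyps J unfolding R_def by auto
  define h where "h Z x = (\<Prod>j\<in>I. indicator (B j) (Z j x)) *\<^sub>R iexp (\<Sum>j\<in>R. t j * Z j x)" for Z :: "'j \<Rightarrow> 'q \<Rightarrow> real" and x
  have hm: "h Z \<in> borel_measurable Q" if Zm: "\<And>j. j \<in> J \<Longrightarrow> Z j \<in> borel_measurable Q" for Z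
  proof -
    have p: "(\<lambda>x. (\<Prod>j\<in>I. indicator (B j) (Z j x)) :: real) \<in> borel_measurable Q"
    proof (rule borel_measurable_prod)
      fix j assume "j \<in> I"
      then have "Z j \<in> borel_measurable Q" "B j \<in> sets borel" using Zm IJ BI by auto
      then show "(\<lambda>x. indicator (B j) (Z j x) :: real) \<in> borel_measurable Q"
        by (rule measurable_compose[OF _ borel_measurable_indicator])
    qed
    have q: "(\<lambda>x. (\<Sum>j\<in>R. t j * Z j x)) \<in> borel_measurable Q"
    proof (rule borel_measurable_sum)
      fix j assume "j \<in> R"
      then have "Z j \<in> borel_measurable Q" using Zm R_def by auto
      then show "(\<lambda>x. t j * Z j x) \<in> borel_measurable Q" by measurable
    qed
    show ?thesis unfolding h_def using p q by measurable
  qed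
  have hb: "norm (h Z x) \<le> 1" for Z x
  proof -
    have "0 \<le> (\<Prod>j\<in>I. indicator (B j) (Z j x) :: real)" by (rule prod_nonneg) (simp add: indicator_def)
    moreover have "(\<Prod>j\<in>I. indicator (B j) (Z j x) :: real) \<le> 1" by (rule prod_le_1) (simp add: indicator_def)
    ultimately show ?thesis unfolding h_def by simp
  qed
  have iexp_add': "iexp u * iexp v = iexp (u + v)" for u v :: real
    by (metis distrib_left exp_add of_real_add)
  have key: "iexp (s * Z a x) * h Z x = (\<Prod>j\<in>I. indicator (B j) (Z j x)) *\<^sub>R iexp (\<Sum>j\<in>J - I. (t(a:=s)) j * Z j x)"
    for s Z x
  proof -
    have "(\<Sum>j\<in>J - I. (t(a:=s)) j * Z j x) = s * Z a x + (\<Sum>j\<in>R. t j * Z j x)"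
    proof -
      have "(\<Sum>j\<in>R. (t(a:=s)) j * Z j x) = (\<Sum>j\<in>R. t j * Z j x)" by (rule sum.cong) (use JI(2) in auto)
      then show ?thesis unfolding JI(1) using JI(2,3) by simp
    qed
    then show ?thesis unfolding h_def by (simp only: iexp_add' mult_scaleR_right)
  qed
  have keyc: "iexp (s * Z a x) * cnj (h Z x) = (\<Prod>j\<in>I. indicator (B j) (Z j x)) *\<^sub>R iexp (\<Sum>j\<in>J - I. ((\<lambda>j. - t j)(a:=s)) j * Z j x)"
    for s Z x
  proof -
    have "(\<Sum>j\<in>J - I. ((\<lambda>j. - t j)(a:=s)) j * Z j x) = s * Z a x + - (\<Sum>j\<in>R. t j * Z j x)"
    proof -
      have "(\<Sum>j\<in>R. ((\<lambda>j. - t j)(a:=s)) j * Z j x) = - (\<Sum>j\<in>R. t j * Z j x)"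
        unfolding sum_negf[symmetric] by (rule sum.cong) (use JI(2) in auto)
      then show ?thesis unfolding JI(1) using JI(2,3) by simp
    qed
    moreover have "cnj (iexp y) = iexp (- y)" for y
      by (simp add: exp_cnj)
    moreover have "cnj (r *\<^sub>R z) = r *\<^sub>R cnj z" for r z by (simp add: scaleR_conv_of_real)
    ultimately show ?thesis unfolding h_def by (simp only: iexp_add' mult_scaleR_right)
  qed
  have "(\<integral>x. indicator (B a) (Z1 a x) *\<^sub>R h Z1 x \<partial>Q) = (\<integral>x. indicator (B a) (Z2 a x) *\<^sub>R h Z2 x \<partial>Q)"
  proof (rule uniq_cplx[OF Q _ _ hm hm hb hb _ _ Ba])
    show "Z1 a \<in> borel_measurable Q" using m1 aJ by blast
    show "Z2 a \<in> borel_measurable Q" using m2 aJ by blast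
    show "\<And>j. j \<in> J \<Longrightarrow> Z1 j \<in> borel_measurable Q" by (rule m1)
    show "\<And>j. j \<in> J \<Longrightarrow> Z2 j \<in> borel_measurable Q" by (rule m2)
    show "(\<integral>x. iexp (s * Z1 a x) * h Z1 x \<partial>Q) = (\<integral>x. iexp (s * Z2 a x) * h Z2 x \<partial>Q)" for s
      unfolding key using insert.IH[OF IJ BI] .
    show "(\<integral>x. iexp (s * Z1 a x) * cnj (h Z1 x) \<partial>Q) = (\<integral>x. iexp (s * Z2 a x) * cnj (h Z2 x) \<partial>Q)" for s
      unfolding keyc using insert.IH[OF IJ BI] .
  qed
  moreover have "indicator (B a) (Z a x) *\<^sub>R h Z x = (\<Prod>j\<in>insert a I. indicator (B j) (Z j x)) *\<^sub>R iexp (\<Sum>j\<in>J - insert a I. t j * Z j x)" for Z x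
    unfolding h_def R_def using insert.hyps by simp
  ultimately show ?case by simp
qed

lemma uniq_multi:
  fixes Q :: "'q measure" and J :: "'j set" and Z1 Z2 :: "'j \<Rightarrow> 'q \<Rightarrow> real"
  assumes Q: "prob_space Q" and J: "finite J"
    and m1: "\<And>j. j \<in> J \<Longrightarrow> Z1 j \<in> borel_measurable Q"
    and m2: "\<And>j. j \<in> J \<Longrightarrow> Z2 j \<in> borel_measurable Q"
    and ch: "\<And>t. (\<integral>x. iexp (\<Sum>j\<in>J. t j * Z1 j x) \<partial>Q) = (\<integral>x. iexp (\<Sum>j\<in>J. t j * Z2 j x) \<partial>Q)"
    and B: "\<And>j. j \<in> J \<Longrightarrow> B j \<in> sets borel"
  shows "(\<integral>x. (\<Prod>j\<in>J. indicator (B j) (Z1 j x) :: real) \<partial>Q) = (\<integral>x. (\<Prod>j\<in>J. indicator (B j) (Z2 j x) :: real) \<partial>Q)"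
proof -
  have "(\<integral>x. (\<Prod>j\<in>J. indicator (B j) (Z1 j x)) *\<^sub>R iexp (\<Sum>j\<in>J - J. t j * Z1 j x) \<partial>Q)
      = (\<integral>x. (\<Prod>j\<in>J. indicator (B j) (Z2 j x)) *\<^sub>R iexp (\<Sum>j\<in>J - J. t j * Z2 j x) \<partial>Q)" for t
    by (rule uniq_multi_gen[OF Q J m1 m2 ch]) (use B in auto)
  then have "complex_of_real (\<integral>x. (\<Prod>j\<in>J. indicator (B j) (Z1 j x)) \<partial>Q) = complex_of_real (\<integral>x. (\<Prod>j\<in>J. indicator (B j) (Z2 j x)) \<partial>Q)"
    by (simp add: scaleR_conv_of_real del: of_real_prod)
  then show ?thesis by simp
qed


lemma gauss_moments:
  fixes P :: "'a measure" and Lf :: "'a \<Rightarrow> real" and q :: real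
  assumes P: "prob_space P" and Lm[measurable]: "Lf \<in> borel_measurable P"
    and ch: "\<And>t. (\<integral>w. iexp (t * Lf w) \<partial>P) = complex_of_real (exp (- (t^2 * q) / 2))"
  shows "q \<ge> 0 \<and> integrable P (\<lambda>w. (Lf w)^2) \<and> (\<integral>w. (Lf w)^2 \<partial>P) = q
    \<and> integrable P Lf \<and> (\<integral>w. Lf w \<partial>P) = 0"
proof -
  interpret P: prob_space P by fact
  have "norm (\<integral>w. iexp (1 * Lf w) \<partial>P) \<le> (\<integral>w. norm (iexp (1 * Lf w)) \<partial>P)"
    by (rule integral_norm_bound)
  also have "\<dots> = 1" by (simp add: P.prob_space del: of_real_mult)
  finally have "exp (- q / 2) \<le> 1" using ch[of 1] by simp
  then have q0: "q \<ge> 0" by simp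
  show ?thesis
  proof (cases "q = 0")
    case True
    define D where "D = distr P borel Lf"
    define R0 where "R0 = return (borel :: real measure) 0"
    have rdD: "real_distribution D" unfolding D_def real_distribution_def real_distribution_axioms_def
      using P.prob_space_distr[of Lf borel] by simp
    have rdR: "real_distribution R0" unfolding R0_def real_distribution_def real_distribution_axioms_def
      using prob_space_return[of 0 "borel :: real measure"] by simp
    have "char D = char R0"
    proof
      fix t
      have "char D t = (\<integral>w. iexp (t * Lf w) \<partial>P)" unfolding char_def D_def
        by (subst integral_distr) auto
      also have "\<dots> = 1" using ch[of t] True by simp
      also have "\<dots> = char R0 t" unfolding char_def R0_def by (subst integral_return) auto
      finally show "char D t = char R0 t" .
    qed
    then have DR: "D = R0" using Levy_uniqueness rdD rdR by blast
    have I: "(\<integral>w. g (Lf w) \<partial>P) = g 0" if [measurable]: "g \<in> borel_measurable borel" for g :: "real \<Rightarrow> real"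
    proof -
      have "(\<integral>w. g (Lf w) \<partial>P) = integral\<^sup>L D g" unfolding D_def by (subst integral_distr) auto
      also have "\<dots> = g 0" unfolding DR R0_def by (subst integral_return) auto
      finally show ?thesis .
    qed
    have J: "integrable P (\<lambda>w. g (Lf w))" if [measurable]: "g \<in> borel_measurable borel" for g :: "real \<Rightarrow> real"
    proof -
      interpret R0: prob_space R0 using rdR by (simp add: real_distribution_def)
      have "integrable R0 g"
      proof (rule R0.integrable_const_bound[where B="norm (g 0)"])
        show "AE x in R0. norm (g x) \<le> norm (g 0)" unfolding R0_def by (simp add: AE_return)
      qed (simp add: R0_def)
      then have "integrable D g" using DR by simp
      then show ?thesis unfolding D_def by (subst (asm) integrable_distr_eq) auto
    qed
    show ?thesis using q0 True I[of "\<lambda>x. x^2"] I[of "\<lambda>x. x"] J[of "\<lambda>x. x^2"] J[of "\<lambda>x. x"] by simp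
  next
    case False
    then have qp: "q > 0" using q0 by simp
    define \<sigma> where "\<sigma> = sqrt q"
    have sp: "\<sigma> > 0" and s2: "\<sigma>^2 = q" using qp unfolding \<sigma>_def by auto
    define D where "D = distr P borel (\<lambda>w. Lf w / \<sigma>)"
    have rdD: "real_distribution D" unfolding D_def real_distribution_def real_distribution_axioms_def
      using P.prob_space_distr[of "\<lambda>w. Lf w / \<sigma>" borel] by simp
    have "char D = char std_normal_distribution"
    proof
      fix t
      have "char D t = (\<integral>w. iexp ((t / \<sigma>) * Lf w) \<partial>P)" unfolding char_def D_def
        by (subst integral_distr) auto
      also have "\<dots> = complex_of_real (exp (- (t^2) / 2))"
        unfolding ch using sp s2 qp by (simp add: power_divide)
      also have "\<dots> = char std_normal_distribution t" by (simp add: char_std_normal_distribution)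
      finally show "char D t = char std_normal_distribution t" .
    qed
    then have DR: "D = std_normal_distribution" using Levy_uniqueness rdD real_dist_normal_dist by blast
    have I: "(\<integral>w. (Lf w / \<sigma>)^k \<partial>P) = (\<integral>x. x^k \<partial>std_normal_distribution)" for k
      unfolding DR[symmetric] D_def by (subst integral_distr) auto
    have J: "integrable P (\<lambda>w. (Lf w / \<sigma>)^k)" for k
    proof -
      have "integrable D (\<lambda>x. x^k)" unfolding DR by (rule integrable_std_normal_distribution_moment)
      then show ?thesis unfolding D_def by (subst (asm) integrable_distr_eq) auto
    qed
    have e1: "(\<lambda>w. (Lf w)^2) = (\<lambda>w. \<sigma>^2 * (Lf w / \<sigma>)^2)" using sp by (auto simp: power_divide)
    have e2: "Lf = (\<lambda>w. \<sigma> * (Lf w / \<sigma>)^1)" using sp by auto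
    have m2: "(\<integral>x. x^(2*1) \<partial>std_normal_distribution) = 1"
      by (subst std_normal_distribution_even_moments(1)) simp
    have m1: "(\<integral>x. x^1 \<partial>std_normal_distribution) = 0"
      by (rule integral_std_normal_distribution_moment_odd) simp
    show ?thesis
    proof (intro conjI)
      show "q \<ge> 0" by fact
      show "integrable P (\<lambda>w. (Lf w)^2)" unfolding e1 using J[of 2] by simp
      show "(\<integral>w. (Lf w)^2 \<partial>P) = q" unfolding e1 using I[of 2] m2 s2 by simp
      show "integrable P Lf" by (subst e2) (rule integrable_mult_right[OF J[of 1]])
      show "(\<integral>w. Lf w \<partial>P) = 0" using I[of 1] m1 sp by simp
    qed
  qed
qed


locale setting = prob_space P for P :: "'a measure" +
  fixes l m :: nat and \<rho> \<gamma> :: real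
    and X :: "'a \<Rightarrow> nat \<Rightarrow> real"
    and N :: "nat set \<Rightarrow> 'a \<Rightarrow> nat \<Rightarrow> real"
    and U :: "nat set \<times> nat \<Rightarrow> 'a \<Rightarrow> real"
    and Subs :: "nat set set"
  assumes l2: "l \<ge> 2"
    and rho_lt: "\<rho> < 1"
    and m2: "2 \<le> m" and ml: "m \<le> l"
    and gpos: "\<gamma> > 0"
    and Subs_def: "Subs = {S. S \<subseteq> {1..l} \<and> card S = m}"
    and X_gauss: "gaussian_vec P {1..l} X (\<lambda>i j. if i = j then 1 else \<rho>)"
    and N_gauss: "\<forall>S\<in>Subs. gaussian_vec P {..<m} (N S) (Mmat m)"
    and indep: "indep_vars
        (\<lambda>k. case k of None \<Rightarrow> PiM {1..l} (\<lambda>_. borel) | Some S \<Rightarrow> PiM {..<m} (\<lambda>_. borel))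
        (\<lambda>k w. case k of None \<Rightarrow> restrict (X w) {1..l} | Some S \<Rightarrow> restrict (N S w) {..<m})
        (insert None (Some ` Subs))"
    and U_def: "\<forall>S\<in>Subs. \<forall>j<m. U (S, j) =
        (\<lambda>w. (\<Sum>k<m. Mmat m j k * X w (elem_of S k)) + sqrt \<gamma> * N S w j)"
begin

definition Sig :: "nat \<Rightarrow> nat \<Rightarrow> real" where "Sig i j = (if i = j then 1 else \<rho>)"

definition L :: "(nat \<Rightarrow> real) \<Rightarrow> (nat set \<Rightarrow> nat \<Rightarrow> real) \<Rightarrow> 'a \<Rightarrow> real" where
  "L a b w = (\<Sum>i\<in>{1..l}. a i * X w i) + (\<Sum>S\<in>Subs. \<Sum>j<m. b S j * N S w j)"

definition qf :: "(nat \<Rightarrow> real) \<Rightarrow> (nat set \<Rightarrow> nat \<Rightarrow> real) \<Rightarrow> real" where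
  "qf a b = (\<Sum>i\<in>{1..l}. \<Sum>j\<in>{1..l}. a i * Sig i j * a j) + (\<Sum>S\<in>Subs. \<Sum>j<m. \<Sum>k<m. b S j * Mmat m j k * b S k)"

lemma finite_Subs: "finite Subs"
  unfolding Subs_def by (rule finite_subset[of _ "Pow {1..l}"]) auto

lemma X_meas[measurable]: "i \<in> {1..l} \<Longrightarrow> (\<lambda>w. X w i) \<in> borel_measurable P"
  using X_gauss unfolding gaussian_vec_def by blast

lemma N_meas[measurable]: "S \<in> Subs \<Longrightarrow> j < m \<Longrightarrow> (\<lambda>w. N S w j) \<in> borel_measurable P"
  using N_gauss unfolding gaussian_vec_def by blast

lemma L_meas[measurable]: "L a b \<in> borel_measurable P"
proof -
  have 1: "(\<lambda>w. \<Sum>i\<in>{1..l}. a i * X w i) \<in> borel_measurable P"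
    by (rule borel_measurable_sum) (use X_meas in measurable)
  have 2: "(\<lambda>w. \<Sum>S\<in>Subs. \<Sum>j<m. b S j * N S w j) \<in> borel_measurable P"
  proof (rule borel_measurable_sum)
    fix S assume S: "S \<in> Subs"
    show "(\<lambda>w. \<Sum>j<m. b S j * N S w j) \<in> borel_measurable P"
      by (rule borel_measurable_sum) (use N_meas[OF S] in measurable)
  qed
  show ?thesis unfolding L_def[abs_def] using 1 2 by measurable
qed

lemma iexp_add: "iexp (u + v) = iexp u * iexp v"
  by (metis distrib_left exp_add of_real_add)

lemma iexp_sum: "finite A \<Longrightarrow> iexp (\<Sum>x\<in>A. f x) = (\<Prod>x\<in>A. iexp (f x))"
proof (induction A rule: finite_induct)
  case empty
  then show ?case by simp
next
  case (insert x F)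
  then show ?case by (simp only: sum.insert[OF insert.hyps] prod.insert[OF insert.hyps] iexp_add insert.IH)
qed

lemma charL: "(\<integral>w. iexp (L a b w) \<partial>P) = complex_of_real (exp (- qf a b / 2))"
proof -
  define Ik where "Ik = insert None (Some ` Subs)"
  define V where "V k w = (case k of None \<Rightarrow> restrict (X w) {1..l} | Some S \<Rightarrow> restrict (N S w) {..<m})" for k w
  define Mk where "Mk k = (case k of None \<Rightarrow> PiM {1..l} (\<lambda>_. borel) | Some S \<Rightarrow> PiM {..<m} (\<lambda>_. borel :: real measure))" for k :: "nat set option"
  define F where "F k v = (case k of None \<Rightarrow> iexp (\<Sum>i\<in>{1..l}. a i * v i) | Some S \<Rightarrow> iexp (\<Sum>j<m. b S j * v j))" for k v
  have fin: "finite Ik" unfolding Ik_def using finite_Subs by simp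
  have Fm: "F k \<in> measurable (Mk k) borel" for k
    unfolding F_def Mk_def by (cases k) simp_all
  have ind: "indep_vars (\<lambda>_. borel) (\<lambda>k w. F k (V k w)) Ik"
    unfolding Ik_def V_def
    by (rule indep_vars_compose2[OF indep]) (use Fm[unfolded Mk_def] in auto)
  have FV_None: "F None (V None w) = iexp (\<Sum>i\<in>{1..l}. a i * X w i)" for w
    unfolding F_def V_def by simp
  have FV_Some: "F (Some S) (V (Some S) w) = iexp (\<Sum>j<m. b S j * N S w j)" for S w
    unfolding F_def V_def by simp
  have FVm: "(\<lambda>w. F k (V k w)) \<in> borel_measurable P" if "k \<in> Ik" for k
  proof (cases k)
    case None
    have "(\<lambda>w. \<Sum>i\<in>{1..l}. a i * X w i) \<in> borel_measurable P"
      by (rule borel_measurable_sum) (use X_meas in measurable)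
    then show ?thesis unfolding None FV_None by measurable
  next
    case (Some S)
    then have S: "S \<in> Subs" using that unfolding Ik_def by auto
    have "(\<lambda>w. \<Sum>j<m. b S j * N S w j) \<in> borel_measurable P"
      by (rule borel_measurable_sum) (use N_meas[OF S] in measurable)
    then show ?thesis unfolding Some FV_Some by measurable
  qed
  have FVi: "integrable P (\<lambda>w. F k (V k w))" if "k \<in> Ik" for k
  proof (rule integrable_const_bound[where B=1])
    show "AE x in P. norm (F k (V k x)) \<le> 1" unfolding F_def
      by (cases k) (simp_all del: of_real_sum of_real_mult)
  qed (rule FVm[OF that])
  have prodeq: "iexp (L a b w) = (\<Prod>k\<in>Ik. F k (V k w))" for w
  proof -
    have "(\<Prod>k\<in>Ik. F k (V k w)) = F None (V None w) * (\<Prod>S\<in>Subs. F (Some S) (V (Some S) w))"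
      unfolding Ik_def using finite_Subs by (simp add: prod.reindex)
    also have "\<dots> = iexp (\<Sum>i\<in>{1..l}. a i * X w i) * iexp (\<Sum>S\<in>Subs. \<Sum>j<m. b S j * N S w j)"
      unfolding FV_None FV_Some by (simp only: iexp_sum[OF finite_Subs])
    finally show ?thesis unfolding L_def by (simp only: iexp_add)
  qed
  have "(\<integral>w. iexp (L a b w) \<partial>P) = (\<Prod>k\<in>Ik. \<integral>w. F k (V k w) \<partial>P)"
    unfolding prodeq by (rule indep_vars_lebesgue_integral[OF fin ind FVi])
  also have "\<dots> = (\<integral>w. F None (V None w) \<partial>P) * (\<Prod>S\<in>Subs. \<integral>w. F (Some S) (V (Some S) w) \<partial>P)"
    unfolding Ik_def using finite_Subs by (simp add: prod.reindex)
  also have "\<dots> = complex_of_real (exp (- (\<Sum>i\<in>{1..l}. \<Sum>j\<in>{1..l}. a i * Sig i j * a j) / 2)) *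
      (\<Prod>S\<in>Subs. complex_of_real (exp (- (\<Sum>j<m. \<Sum>k<m. b S j * Mmat m j k * b S k) / 2)))"
  proof -
    have 1: "(\<integral>w. F None (V None w) \<partial>P) = complex_of_real (exp (- (\<Sum>i\<in>{1..l}. \<Sum>j\<in>{1..l}. a i * Sig i j * a j) / 2))"
      unfolding FV_None using X_gauss unfolding gaussian_vec_def Sig_def by blast
    have 2: "(\<integral>w. F (Some S) (V (Some S) w) \<partial>P) = complex_of_real (exp (- (\<Sum>j<m. \<Sum>k<m. b S j * Mmat m j k * b S k) / 2))"
      if "S \<in> Subs" for S
      unfolding FV_Some using N_gauss that unfolding gaussian_vec_def by blast
    show ?thesis using 1 2 by simp
  qed
  also have "\<dots> = complex_of_real (exp (- qf a b / 2))"
  proof -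
    define A where "A = (\<Sum>i\<in>{1..l}. \<Sum>j\<in>{1..l}. a i * Sig i j * a j)"
    define B where "B S = (\<Sum>j<m. \<Sum>k<m. b S j * Mmat m j k * b S k)" for S
    have "- qf a b / 2 = - A / 2 + (\<Sum>S\<in>Subs. - B S / 2)"
      unfolding qf_def A_def B_def by (simp add: sum_negf sum_divide_distrib[symmetric] field_simps)
    then have "exp (- qf a b / 2) = exp (- A / 2) * (\<Prod>S\<in>Subs. exp (- B S / 2))"
      by (simp only: exp_add exp_sum[OF finite_Subs])
    then show ?thesis unfolding A_def B_def by simp
  qed
  finally show ?thesis .
qed

end


context setting begin

lemma L_scale: "L (\<lambda>i. t * a i) (\<lambda>S j. t * b S j) w = t * L a b w"
  unfolding L_def by (simp add: sum_distrib_left algebra_simps)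

lemma qf_scale: "qf (\<lambda>i. t * a i) (\<lambda>S j. t * b S j) = t^2 * qf a b"
  unfolding qf_def by (simp add: sum_distrib_left algebra_simps power2_eq_square)

lemma L_moments: "qf a b \<ge> 0 \<and> integrable P (\<lambda>w. (L a b w)^2) \<and> (\<integral>w. (L a b w)^2 \<partial>P) = qf a b
    \<and> integrable P (L a b) \<and> (\<integral>w. L a b w \<partial>P) = 0"
proof -
  have "(\<integral>w. iexp (t * L a b w) \<partial>P) = complex_of_real (exp (- (t^2 * qf a b) / 2))" for t
    using charL[of "\<lambda>i. t * a i" "\<lambda>S j. t * b S j"] unfolding L_scale qf_scale .
  from gauss_moments[OF prob_space_axioms L_meas this] show ?thesis by (simp add: fun_eq_iff)
qed

definition bf :: "(nat \<Rightarrow> real) \<Rightarrow> (nat set \<Rightarrow> nat \<Rightarrow> real) \<Rightarrow> (nat \<Rightarrow> real) \<Rightarrow> (nat set \<Rightarrow> nat \<Rightarrow> real) \<Rightarrow> real" where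
  "bf a1 b1 a2 b2 = (\<Sum>i\<in>{1..l}. \<Sum>j\<in>{1..l}. a1 i * Sig i j * a2 j) + (\<Sum>S\<in>Subs. \<Sum>j<m. \<Sum>k<m. b1 S j * Mmat m j k * b2 S k)"

lemma L_add: "L (\<lambda>i. a1 i + a2 i) (\<lambda>S j. b1 S j + b2 S j) w = L a1 b1 w + L a2 b2 w"
  unfolding L_def by (simp add: sum.distrib algebra_simps)

lemma Sig_sym: "Sig i j = Sig j i" unfolding Sig_def by auto

lemma Mmat_sym: "Mmat m i j = Mmat m j i" unfolding Mmat_def by auto

lemma bf_sym: "bf a2 b2 a1 b1 = bf a1 b1 a2 b2"
proof -
  have 1: "(\<Sum>i\<in>{1..l}. \<Sum>j\<in>{1..l}. a2 i * Sig i j * a1 j) = (\<Sum>i\<in>{1..l}. \<Sum>j\<in>{1..l}. a1 i * Sig i j * a2 j)"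
    by (subst sum.swap) (simp add: Sig_sym[of _ i for i] mult.commute mult.left_commute)
  have 2: "(\<Sum>j<m. \<Sum>k<m. b2 S j * Mmat m j k * b1 S k) = (\<Sum>j<m. \<Sum>k<m. b1 S j * Mmat m j k * b2 S k)" for S
    by (subst sum.swap) (simp add: Mmat_sym[of _ i for i] mult.commute mult.left_commute)
  show ?thesis unfolding bf_def 1 2 ..
qed

lemma qf_add: "qf (\<lambda>i. a1 i + a2 i) (\<lambda>S j. b1 S j + b2 S j) = qf a1 b1 + 2 * bf a1 b1 a2 b2 + qf a2 b2"
proof -
  have "qf (\<lambda>i. a1 i + a2 i) (\<lambda>S j. b1 S j + b2 S j) = qf a1 b1 + bf a1 b1 a2 b2 + bf a2 b2 a1 b1 + qf a2 b2"
    unfolding qf_def bf_def by (simp add: sum.distrib algebra_simps)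
  then show ?thesis using bf_sym[of a2 b2 a1 b1] by simp
qed

lemma L_prod: "integrable P (\<lambda>w. L a1 b1 w * L a2 b2 w) \<and> (\<integral>w. L a1 b1 w * L a2 b2 w \<partial>P) = bf a1 b1 a2 b2"
proof -
  define a3 where "a3 i = a1 i + a2 i" for i
  define b3 where "b3 S j = b1 S j + b2 S j" for S j
  have e: "L a1 b1 w * L a2 b2 w = ((L a3 b3 w)^2 - (L a1 b1 w)^2 - (L a2 b2 w)^2) / 2" for w
    unfolding a3_def b3_def L_add by (simp add: power2_eq_square algebra_simps)
  have i1: "integrable P (\<lambda>w. (L a1 b1 w)^2)" and i2: "integrable P (\<lambda>w. (L a2 b2 w)^2)"
    and i3: "integrable P (\<lambda>w. (L a3 b3 w)^2)" using L_moments by blast+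
  have I: "integrable P (\<lambda>w. ((L a3 b3 w)^2 - (L a1 b1 w)^2 - (L a2 b2 w)^2) / 2)"
    using i1 i2 i3 by auto
  have "(\<integral>w. ((L a3 b3 w)^2 - (L a1 b1 w)^2 - (L a2 b2 w)^2) / 2 \<partial>P)
      = ((\<integral>w. (L a3 b3 w)^2 \<partial>P) - (\<integral>w. (L a1 b1 w)^2 \<partial>P) - (\<integral>w. (L a2 b2 w)^2 \<partial>P)) / 2"
    using i1 i2 i3 by simp
  also have "\<dots> = (qf a3 b3 - qf a1 b1 - qf a2 b2) / 2" using L_moments by simp
  also have "\<dots> = bf a1 b1 a2 b2" unfolding a3_def b3_def qf_add by simp
  finally show ?thesis using I unfolding e by simp
qed

end


lemma card_supsets:
  assumes A: "finite A" and DA: "D \<subseteq> A" and Dk: "card D \<le> k"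
  shows "card {S. S \<subseteq> A \<and> card S = k \<and> D \<subseteq> S} = (card A - card D) choose (k - card D)"
proof -
  have fD: "finite D" using A DA finite_subset by blast
  have "bij_betw (\<lambda>S. S - D) {S. S \<subseteq> A \<and> card S = k \<and> D \<subseteq> S} {T. T \<subseteq> A - D \<and> card T = k - card D}"
  proof (rule bij_betwI[where g="\<lambda>T. T \<union> D"])
    show "(\<lambda>S. S - D) \<in> {S. S \<subseteq> A \<and> card S = k \<and> D \<subseteq> S} \<rightarrow> {T. T \<subseteq> A - D \<and> card T = k - card D}"
      using fD by (auto simp: card_Diff_subset)
    show "(\<lambda>T. T \<union> D) \<in> {T. T \<subseteq> A - D \<and> card T = k - card D} \<rightarrow> {S. S \<subseteq> A \<and> card S = k \<and> D \<subseteq> S}"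
    proof
      fix T assume T: "T \<in> {T. T \<subseteq> A - D \<and> card T = k - card D}"
      then have fT: "finite T" using A finite_subset by blast
      have "card (T \<union> D) = card T + card D" using T fT fD by (intro card_Un_disjoint) auto
      then show "T \<union> D \<in> {S. S \<subseteq> A \<and> card S = k \<and> D \<subseteq> S}" using T DA Dk by auto
    qed
  qed auto
  then have "card {S. S \<subseteq> A \<and> card S = k \<and> D \<subseteq> S} = card {T. T \<subseteq> A - D \<and> card T = k - card D}"
    by (rule bij_betw_same_card)
  also have "\<dots> = card (A - D) choose (k - card D)" by (rule n_subsets) (use A in simp)
  also have "card (A - D) = card A - card D" using DA fD by (simp add: card_Diff_subset)
  finally show ?thesis .
qed

context setting begin

definition c :: real where "c = real ((l - 2) choose (m - 2))"

lemma elem_bij: "S \<in> Subs \<Longrightarrow> bij_betw (elem_of S) {..<m} S"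
  unfolding elem_of_def Subs_def
  by (rule bij_betw_nth) (auto simp: finite_subset[of _ "{1..l}"])

lemma sum_elem: "S \<in> Subs \<Longrightarrow> (\<Sum>j<m. g (elem_of S j)) = (\<Sum>u\<in>S. g u)"
  using sum.reindex_bij_betw[OF elem_bij] by blast

lemma elem_in: "S \<in> Subs \<Longrightarrow> j < m \<Longrightarrow> elem_of S j \<in> S"
  using elem_bij[unfolded bij_betw_def] by blast

lemma elem_inj: "S \<in> Subs \<Longrightarrow> j < m \<Longrightarrow> k < m \<Longrightarrow> elem_of S j = elem_of S k \<longleftrightarrow> j = k"
  using elem_bij[unfolded bij_betw_def] by (auto dest: inj_onD)

lemma Subs_sub: "S \<in> Subs \<Longrightarrow> S \<subseteq> {1..l}" and Subs_card: "S \<in> Subs \<Longrightarrow> card S = m"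
  unfolding Subs_def by auto

lemma count_pairs:
  assumes i: "i \<in> {1..l}" and v: "v \<in> {1..l}"
  shows "card {S\<in>Subs. i \<in> S \<and> v \<in> S} = (if v = i then (l - 1) choose (m - 1) else (l - 2) choose (m - 2))"
proof -
  have eq: "{S\<in>Subs. i \<in> S \<and> v \<in> S} = {S. S \<subseteq> {1..l} \<and> card S = m \<and> {i, v} \<subseteq> S}"
    unfolding Subs_def by auto
  show ?thesis
  proof (cases "v = i")
    case True
    then show ?thesis unfolding eq using card_supsets[of "{1..l}" "{i, v}" m] i m2 by simp
  next
    case False
    then show ?thesis unfolding eq using card_supsets[of "{1..l}" "{i, v}" m] i v m2 by (simp add: numeral_2_eq_2)
  qed
qed

lemma choose_id: "real (m - 1) * real ((l - 1) choose (m - 1)) = real (l - 1) * c"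
proof -
  have "Suc (l - 2) * ((l - 2) choose (m - 2)) = (Suc (l - 2) choose Suc (m - 2)) * Suc (m - 2)"
    by (rule Suc_times_binomial_eq)
  moreover have "Suc (l - 2) = l - 1" "Suc (m - 2) = m - 1" using l2 m2 by auto
  ultimately have "(l - 1) * ((l - 2) choose (m - 2)) = ((l - 1) choose (m - 1)) * (m - 1)" by simp
  then have "real ((l - 1) * ((l - 2) choose (m - 2))) = real (((l - 1) choose (m - 1)) * (m - 1))" by simp
  then show ?thesis unfolding c_def by (simp add: mult.commute)
qed

lemma sum_pairs:
  assumes i: "i \<in> {1..l}" and v: "v \<in> {1..l}"
  shows "(\<Sum>S\<in>Subs. if i \<in> S \<and> v \<in> S then (if v = i then real m - 1 else - 1) else 0)
     = c * (if v = i then real l - 1 else - 1)"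
proof -
  have "(\<Sum>S\<in>Subs. if i \<in> S \<and> v \<in> S then (if v = i then real m - 1 else - 1) else (0::real))
      = real (card {S\<in>Subs. i \<in> S \<and> v \<in> S}) * (if v = i then real m - 1 else - 1)"
    using finite_Subs by (simp add: sum.If_cases Int_def conj_commute)
  also have "\<dots> = c * (if v = i then real l - 1 else - 1)"
    unfolding count_pairs[OF i v] using choose_id m2 l2 unfolding c_def
    by (auto simp: of_nat_diff mult.commute)
  finally show ?thesis .
qed

end


context setting begin

definition aU :: "nat set \<Rightarrow> nat \<Rightarrow> nat \<Rightarrow> real" where
  "aU T j' v = (if v \<in> T then (if v = elem_of T j' then real m - 1 else - 1) else 0)"
definition bU :: "nat set \<Rightarrow> nat \<Rightarrow> nat set \<Rightarrow> nat \<Rightarrow> real" where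
  "bU T j' S j = (if S = T \<and> j = j' then sqrt \<gamma> else 0)"
definition \<alpha> :: real where "\<alpha> = (1 - \<rho>) / ((1 - \<rho>) * c * real l + \<gamma>)"
definition Xhat :: "nat \<Rightarrow> 'a \<Rightarrow> real" where
  "Xhat i w = \<alpha> * (\<Sum>S\<in>Subs. \<Sum>j<m. (if elem_of S j = i then U (S, j) w else 0))"
definition aY :: "nat \<Rightarrow> nat \<Rightarrow> real" where
  "aY i v = (if v = i then 1 - \<alpha> * c * real l else 0) + \<alpha> * c"
definition bY :: "nat \<Rightarrow> nat set \<Rightarrow> nat \<Rightarrow> real" where
  "bY i S j = (if elem_of S j = i then - \<alpha> * sqrt \<gamma> else 0)"

lemma sum_restrict_sub: "S \<subseteq> {1..l} \<Longrightarrow> (\<Sum>v\<in>{1..l}. (if v \<in> S then f v else 0)) = (\<Sum>v\<in>S. f v)"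
  by (simp add: sum.inter_restrict[symmetric] Int_absorb1)

lemma L_U_expl:
  assumes T: "T \<in> Subs" and "j' < m"
  shows "L (aU T j') (bU T j') w = (\<Sum>v\<in>T. (if v = elem_of T j' then real m - 1 else - 1) * X w v) + sqrt \<gamma> * N T w j'"
proof -
  have 1: "(\<Sum>i\<in>{1..l}. aU T j' i * X w i) = (\<Sum>v\<in>T. (if v = elem_of T j' then real m - 1 else - 1) * X w v)"
  proof -
    have "(\<Sum>i\<in>{1..l}. aU T j' i * X w i) = (\<Sum>v\<in>{1..l}. if v \<in> T then (if v = elem_of T j' then real m - 1 else - 1) * X w v else 0)"
      by (rule sum.cong) (auto simp: aU_def)
    also have "\<dots> = (\<Sum>v\<in>T. (if v = elem_of T j' then real m - 1 else - 1) * X w v)"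
      by (rule sum_restrict_sub[OF Subs_sub[OF T]])
    finally show ?thesis .
  qed
  have 2: "(\<Sum>S\<in>Subs. \<Sum>j<m. bU T j' S j * N S w j) = (\<Sum>S\<in>Subs. if S = T then sqrt \<gamma> * N T w j' else 0)"
  proof (rule sum.cong[OF refl])
    fix S assume "S \<in> Subs"
    have "(\<Sum>j<m. bU T j' S j * N S w j) = (\<Sum>j<m. if j = j' then (if S = T then sqrt \<gamma> * N S w j else 0) else 0)"
      by (rule sum.cong) (auto simp: bU_def)
    also have "\<dots> = (if S = T then sqrt \<gamma> * N T w j' else 0)" using assms(2) by (subst sum.delta) auto
    finally show "(\<Sum>j<m. bU T j' S j * N S w j) = (if S = T then sqrt \<gamma> * N T w j' else 0)" .
  qed
  have 3: "\<dots> = sqrt \<gamma> * N T w j'" using finite_Subs T by (simp add: sum.delta)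
  show ?thesis unfolding L_def 1 2 3 ..
qed

lemma U_L:
  assumes T: "T \<in> Subs" and j': "j' < m"
  shows "U (T, j') w = L (aU T j') (bU T j') w"
proof -
  have "(\<Sum>v\<in>T. (if v = elem_of T j' then real m - 1 else - 1) * X w v)
      = (\<Sum>k<m. (if elem_of T k = elem_of T j' then real m - 1 else - 1) * X w (elem_of T k))"
    by (rule sum_elem[OF T, symmetric])
  also have "\<dots> = (\<Sum>k<m. Mmat m j' k * X w (elem_of T k))"
    by (rule sum.cong) (use elem_inj[OF T _ j'] in \<open>auto simp: Mmat_def\<close>)
  finally show ?thesis unfolding L_U_expl[OF T j'] using U_def T j' by simp
qed

lemma Y_L:
  assumes i: "i \<in> {1..l}"
  shows "X w i - Xhat i w = L (aY i) (bY i) w"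
proof -
  define h where "h v = (if v = i then real m - 1 else - 1)" for v
  define NN where "NN = (\<Sum>S\<in>Subs. \<Sum>j<m. (if elem_of S j = i then sqrt \<gamma> * N S w j else 0))"
  have a: "(\<Sum>j<m. (if elem_of S j = i then U (S, j) w else 0))
      = (if i \<in> S then (\<Sum>v\<in>S. h v * X w v) else 0) + (\<Sum>j<m. (if elem_of S j = i then sqrt \<gamma> * N S w j else 0))"
    if S: "S \<in> Subs" for S
  proof -
    define A where "A u = (\<Sum>v\<in>S. (if v = u then real m - 1 else - 1) * X w v)" for u
    have "(\<Sum>j<m. (if elem_of S j = i then U (S, j) w else 0))
        = (\<Sum>j<m. (if elem_of S j = i then A (elem_of S j) else 0) + (if elem_of S j = i then sqrt \<gamma> * N S w j else 0))"
      by (rule sum.cong) (auto simp: U_L[OF S] L_U_expl[OF S] A_def)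
    also have "\<dots> = (\<Sum>j<m. (if elem_of S j = i then A (elem_of S j) else 0)) + (\<Sum>j<m. (if elem_of S j = i then sqrt \<gamma> * N S w j else 0))"
      by (rule sum.distrib)
    also have "(\<Sum>j<m. (if elem_of S j = i then A (elem_of S j) else 0)) = (\<Sum>u\<in>S. (if u = i then A u else 0))"
      by (rule sum_elem[OF S])
    also have "\<dots> = (if i \<in> S then A i else 0)"
    proof -
      have "finite S" using Subs_sub[OF S] finite_subset by blast
      then show ?thesis by (simp add: sum.delta)
    qed
    also have "A i = (\<Sum>v\<in>S. h v * X w v)" unfolding A_def h_def by (rule sum.cong) auto
    finally show ?thesis .
  qed
  have b: "(\<Sum>S\<in>Subs. (if i \<in> S then (\<Sum>v\<in>S. h v * X w v) else 0))
      = (\<Sum>v\<in>{1..l}. c * (if v = i then real l - 1 else - 1) * X w v)"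
  proof -
    have "(\<Sum>S\<in>Subs. (if i \<in> S then (\<Sum>v\<in>S. h v * X w v) else 0))
        = (\<Sum>S\<in>Subs. \<Sum>v\<in>{1..l}. (if i \<in> S \<and> v \<in> S then h v else 0) * X w v)"
    proof (rule sum.cong[OF refl])
      fix S assume S: "S \<in> Subs"
      have "(\<Sum>v\<in>{1..l}. (if i \<in> S \<and> v \<in> S then h v else 0) * X w v)
          = (\<Sum>v\<in>{1..l}. if v \<in> S then (if i \<in> S then h v * X w v else 0) else 0)"
        by (rule sum.cong) auto
      also have "\<dots> = (\<Sum>v\<in>S. (if i \<in> S then h v * X w v else 0))"
        by (rule sum_restrict_sub[OF Subs_sub[OF S]])
      also have "\<dots> = (if i \<in> S then (\<Sum>v\<in>S. h v * X w v) else 0)" by simp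
      finally show "(if i \<in> S then (\<Sum>v\<in>S. h v * X w v) else 0) = (\<Sum>v\<in>{1..l}. (if i \<in> S \<and> v \<in> S then h v else 0) * X w v)" ..
    qed
    also have "\<dots> = (\<Sum>v\<in>{1..l}. \<Sum>S\<in>Subs. (if i \<in> S \<and> v \<in> S then h v else 0) * X w v)"
      by (rule sum.swap)
    also have "\<dots> = (\<Sum>v\<in>{1..l}. (\<Sum>S\<in>Subs. (if i \<in> S \<and> v \<in> S then h v else 0)) * X w v)"
      by (simp add: sum_distrib_right)
    also have "\<dots> = (\<Sum>v\<in>{1..l}. c * (if v = i then real l - 1 else - 1) * X w v)"
    proof (rule sum.cong[OF refl])
      fix v assume v: "v \<in> {1..l}"
      have "(\<Sum>S\<in>Subs. (if i \<in> S \<and> v \<in> S then h v else 0)) = c * (if v = i then real l - 1 else - 1)"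
        unfolding h_def by (rule sum_pairs[OF i v])
      then show "(\<Sum>S\<in>Subs. (if i \<in> S \<and> v \<in> S then h v else 0)) * X w v = c * (if v = i then real l - 1 else - 1) * X w v"
        by simp
    qed
    finally show ?thesis .
  qed
  have xh: "Xhat i w = \<alpha> * (\<Sum>v\<in>{1..l}. c * (if v = i then real l - 1 else - 1) * X w v) + \<alpha> * NN"
    unfolding Xhat_def NN_def
    by (simp add: a sum.distrib b distrib_left cong: sum.cong)
  have la: "(\<Sum>v\<in>{1..l}. aY i v * X w v) = X w i - \<alpha> * (\<Sum>v\<in>{1..l}. c * (if v = i then real l - 1 else - 1) * X w v)"
  proof -
    have "(\<Sum>v\<in>{1..l}. aY i v * X w v) = (\<Sum>v\<in>{1..l}. (if v = i then X w v else 0) - \<alpha> * (c * (if v = i then real l - 1 else - 1) * X w v))"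
      by (rule sum.cong) (auto simp: aY_def algebra_simps)
    also have "\<dots> = X w i - \<alpha> * (\<Sum>v\<in>{1..l}. c * (if v = i then real l - 1 else - 1) * X w v)"
      using i by (simp add: sum_subtractf sum_distrib_left)
    finally show ?thesis .
  qed
  have lb: "(\<Sum>S\<in>Subs. \<Sum>j<m. bY i S j * N S w j) = - \<alpha> * NN"
  proof -
    have "(\<Sum>S\<in>Subs. \<Sum>j<m. bY i S j * N S w j) = (\<Sum>S\<in>Subs. \<Sum>j<m. - \<alpha> * (if elem_of S j = i then sqrt \<gamma> * N S w j else 0))"
      by (intro sum.cong refl) (simp add: bY_def)
    then show ?thesis unfolding NN_def by (simp add: sum_distrib_left)
  qed
  show ?thesis unfolding L_def la lb xh by simp
qed

end


context setting begin

lemma c_nonneg: "c \<ge> 0" unfolding c_def by simp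

lemma D_pos: "(1 - \<rho>) * c * real l + \<gamma> > 0"
  using rho_lt gpos c_nonneg by (simp add: add_nonneg_pos)

lemma alpha_eq: "\<alpha> * ((1 - \<rho>) * c * real l + \<gamma>) = 1 - \<rho>"
  unfolding \<alpha>_def using D_pos by simp

lemma sumSig: "u \<in> {1..l} \<Longrightarrow> (\<Sum>v\<in>{1..l}. Sig u v * f v) = (1 - \<rho>) * f u + \<rho> * (\<Sum>v\<in>{1..l}. f v)"
proof -
  assume u: "u \<in> {1..l}"
  have "(\<Sum>v\<in>{1..l}. Sig u v * f v) = (\<Sum>v\<in>{1..l}. (if v = u then (1 - \<rho>) * f v else 0) + \<rho> * f v)"
    by (rule sum.cong) (auto simp: Sig_def algebra_simps)
  also have "\<dots> = (1 - \<rho>) * f u + \<rho> * (\<Sum>v\<in>{1..l}. f v)"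
    using u by (simp add: sum.distrib sum_distrib_left)
  finally show ?thesis .
qed

lemma sum_aY: "k \<in> {1..l} \<Longrightarrow> (\<Sum>v\<in>{1..l}. aY k v * f v) = (1 - \<alpha> * c * real l) * f k + \<alpha> * c * (\<Sum>v\<in>{1..l}. f v)"
proof -
  assume k: "k \<in> {1..l}"
  have "(\<Sum>v\<in>{1..l}. aY k v * f v) = (\<Sum>v\<in>{1..l}. (if v = k then (1 - \<alpha> * c * real l) * f v else 0) + \<alpha> * c * f v)"
    by (rule sum.cong) (auto simp: aY_def algebra_simps)
  also have "\<dots> = (1 - \<alpha> * c * real l) * f k + \<alpha> * c * (\<Sum>v\<in>{1..l}. f v)"
    using k by (simp add: sum.distrib sum_distrib_left)
  finally show ?thesis .
qed

lemma sum_aU: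
  assumes T: "T \<in> Subs" and j': "j' < m"
  shows "(\<Sum>v\<in>{1..l}. aU T j' v) = 0"
proof -
  have fT: "finite T" using Subs_sub[OF T] finite_subset by blast
  have e: "elem_of T j' \<in> T" by (rule elem_in[OF T j'])
  have "(\<Sum>v\<in>{1..l}. aU T j' v) = (\<Sum>v\<in>T. (if v = elem_of T j' then real m else 0) - 1)"
    unfolding aU_def by (subst sum_restrict_sub[OF Subs_sub[OF T]]) (rule sum.cong; auto)
  also have "\<dots> = real m - real (card T)" using fT e by (simp add: sum_subtractf sum.delta)
  finally show ?thesis using Subs_card[OF T] by simp
qed

lemma bf_YU:
  assumes i: "i \<in> {1..l}" and T: "T \<in> Subs" and j': "j' < m"
  shows "bf (aY i) (bY i) (aU T j') (bU T j') = 0"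
proof -
  define au where "au = aU T j'"
  have X: "(\<Sum>u\<in>{1..l}. \<Sum>v\<in>{1..l}. aY i u * Sig u v * au v) = (1 - \<rho>) * (1 - \<alpha> * c * real l) * au i"
  proof -
    have "(\<Sum>u\<in>{1..l}. \<Sum>v\<in>{1..l}. aY i u * Sig u v * au v) = (\<Sum>u\<in>{1..l}. aY i u * ((1 - \<rho>) * au u))"
    proof (rule sum.cong[OF refl])
      fix u assume u: "u \<in> {1..l}"
      have "(\<Sum>v\<in>{1..l}. aY i u * Sig u v * au v) = aY i u * (\<Sum>v\<in>{1..l}. Sig u v * au v)"
        by (simp add: sum_distrib_left mult.assoc)
      also have "\<dots> = aY i u * ((1 - \<rho>) * au u)"
        using sumSig[OF u, of au] sum_aU[OF T j'] unfolding au_def by simp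
      finally show "(\<Sum>v\<in>{1..l}. aY i u * Sig u v * au v) = aY i u * ((1 - \<rho>) * au u)" .
    qed
    also have "\<dots> = (1 - \<rho>) * (1 - \<alpha> * c * real l) * au i"
      using sum_aY[OF i, of "\<lambda>u. (1 - \<rho>) * au u"] sum_aU[OF T j']
      unfolding au_def by (simp add: sum_distrib_left[symmetric])
    finally show ?thesis .
  qed
  have B: "(\<Sum>S\<in>Subs. \<Sum>j<m. \<Sum>k<m. bY i S j * Mmat m j k * bU T j' S k) = - \<alpha> * \<gamma> * au i"
  proof -
    have inner: "(\<Sum>j<m. \<Sum>k<m. bY i S j * Mmat m j k * bU T j' S k)
        = (if S = T then - \<alpha> * \<gamma> * (\<Sum>j<m. (if elem_of T j = i then Mmat m j j' else 0)) else 0)" for S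
    proof (cases "S = T")
      case True
      have "(\<Sum>j<m. \<Sum>k<m. bY i S j * Mmat m j k * bU T j' S k) = (\<Sum>j<m. bY i T j * Mmat m j j' * sqrt \<gamma>)"
      proof (rule sum.cong[OF refl])
        fix j
        have "(\<Sum>k<m. bY i S j * Mmat m j k * bU T j' S k) = (\<Sum>k<m. if k = j' then bY i T j * Mmat m j k * sqrt \<gamma> else 0)"
          by (rule sum.cong) (auto simp: bU_def True)
        also have "\<dots> = bY i T j * Mmat m j j' * sqrt \<gamma>" using j' by simp
        finally show "(\<Sum>k<m. bY i S j * Mmat m j k * bU T j' S k) = bY i T j * Mmat m j j' * sqrt \<gamma>" .
      qed
      also have "\<dots> = - \<alpha> * \<gamma> * (\<Sum>j<m. (if elem_of T j = i then Mmat m j j' else 0))"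
        unfolding sum_distrib_left by (rule sum.cong) (use gpos in \<open>auto simp: bY_def\<close>)
      finally show ?thesis using True by simp
    next
      case False
      then show ?thesis by (simp add: bU_def)
    qed
    have m: "(\<Sum>j<m. (if elem_of T j = i then Mmat m j j' else 0)) = au i"
    proof -
      have "(\<Sum>j<m. (if elem_of T j = i then Mmat m j j' else 0))
          = (\<Sum>j<m. (\<lambda>u. if u = i then (if u = elem_of T j' then real m - 1 else - 1) else 0) (elem_of T j))"
        by (rule sum.cong) (use elem_inj[OF T _ j'] in \<open>auto simp: Mmat_def\<close>)
      also have "\<dots> = (\<Sum>u\<in>T. if u = i then (if u = elem_of T j' then real m - 1 else - 1) else 0)"
        by (rule sum_elem[OF T])
      also have "\<dots> = au i"
        using Subs_sub[OF T] finite_subset[OF Subs_sub[OF T]] unfolding au_def aU_def by (simp add: sum.delta)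
      finally show ?thesis .
    qed
    show ?thesis unfolding inner m using finite_Subs T by (simp add: sum.delta)
  qed
  have "bf (aY i) (bY i) (aU T j') (bU T j') = (1 - \<rho>) * (1 - \<alpha> * c * real l) * au i - \<alpha> * \<gamma> * au i"
    unfolding bf_def X[unfolded au_def] B[unfolded au_def] au_def by simp
  also have "\<dots> = au i * ((1 - \<rho>) - \<alpha> * ((1 - \<rho>) * c * real l + \<gamma>))" by (simp add: algebra_simps)
  also have "\<dots> = 0" unfolding alpha_eq by simp
  finally show ?thesis .
qed

end


context setting begin

lemma sum_aY1: "k \<in> {1..l} \<Longrightarrow> (\<Sum>v\<in>{1..l}. aY k v) = 1"
  using sum_aY[of k "\<lambda>_. 1"] by simp

lemma double_delta:
  assumes "finite S"
  shows "(\<Sum>u\<in>S. \<Sum>u'\<in>S. if u = i \<and> u' = j then K u u' else (0::real)) = (if i \<in> S \<and> j \<in> S then K i j else 0)"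
proof -
  have "(\<Sum>u'\<in>S. if u = i \<and> u' = j then K u u' else (0::real)) = (if u = i then (if j \<in> S then K u j else 0) else 0)" for u
    using assms by (cases "u = i") (simp_all add: sum.delta')
  then show ?thesis using assms by (simp add: sum.delta')
qed

lemma bY_inner:
  assumes S: "S \<in> Subs"
  shows "(\<Sum>j1<m. \<Sum>k<m. bY i S j1 * Mmat m j1 k * bY j S k)
    = \<alpha>^2 * \<gamma> * (if i \<in> S \<and> j \<in> S then (if j = i then real m - 1 else - 1) else 0)"
proof -
  have fS: "finite S" using Subs_sub[OF S] finite_subset by blast
  have "(\<Sum>j1<m. \<Sum>k<m. bY i S j1 * Mmat m j1 k * bY j S k)
      = (\<Sum>j1<m. \<Sum>k<m. \<alpha>^2 * \<gamma> * (\<lambda>u u'. if u = i \<and> u' = j then (if u = u' then real m - 1 else - 1) else 0) (elem_of S j1) (elem_of S k))"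
  proof (intro sum.cong refl)
    fix j1 k assume "j1 \<in> {..<m}" "k \<in> {..<m}"
    then show "bY i S j1 * Mmat m j1 k * bY j S k = \<alpha>^2 * \<gamma> * (\<lambda>u u'. if u = i \<and> u' = j then (if u = u' then real m - 1 else - 1) else 0) (elem_of S j1) (elem_of S k)"
      using elem_inj[OF S, of j1 k] gpos by (auto simp: bY_def Mmat_def power2_eq_square)
  qed
  also have "\<dots> = (\<Sum>u\<in>S. \<Sum>u'\<in>S. \<alpha>^2 * \<gamma> * (if u = i \<and> u' = j then (if u = u' then real m - 1 else - 1) else 0))"
  proof -
    define F where "F u u' = \<alpha>^2 * \<gamma> * (if u = i \<and> u' = j then (if u = u' then real m - 1 else - 1) else (0::real))" for u u'
    have inner: "(\<Sum>k<m. F u (elem_of S k)) = (\<Sum>u'\<in>S. F u u')" for u by (rule sum_elem[OF S])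
    have "(\<Sum>j1<m. \<Sum>k<m. F (elem_of S j1) (elem_of S k)) = (\<Sum>j1<m. \<Sum>u'\<in>S. F (elem_of S j1) u')"
      by (simp only: inner)
    also have "\<dots> = (\<Sum>u\<in>S. \<Sum>u'\<in>S. F u u')" by (rule sum_elem[OF S])
    finally show ?thesis unfolding F_def .
  qed
  also have "\<dots> = \<alpha>^2 * \<gamma> * (if i \<in> S \<and> j \<in> S then (if j = i then real m - 1 else - 1) else 0)"
    using double_delta[OF fS, of i j "\<lambda>u u'. \<alpha>^2 * \<gamma> * (if u = u' then real m - 1 else - 1)"]
    by (simp add: if_distrib[of "\<lambda>x. \<alpha>^2 * \<gamma> * x"] cong: if_cong)
  finally show ?thesis .
qed

lemma bf_YY:
  assumes i: "i \<in> {1..l}" and j: "j \<in> {1..l}"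
  shows "bf (aY i) (bY i) (aY j) (bY j)
    = (1 - \<rho>) * ((if i = j then (1 - \<alpha> * c * real l)^2 else 0) + 2 * (1 - \<alpha> * c * real l) * (\<alpha> * c) + real l * (\<alpha> * c)^2)
      + \<rho> + \<alpha>^2 * \<gamma> * c * (if i = j then real l - 1 else - 1)"
proof -
  define A where "A = 1 - \<alpha> * c * real l"
  define B where "B = \<alpha> * c"
  have X: "(\<Sum>u\<in>{1..l}. \<Sum>v\<in>{1..l}. aY i u * Sig u v * aY j v)
      = (1 - \<rho>) * ((if i = j then A^2 else 0) + 2 * A * B + real l * B^2) + \<rho>"
  proof -
    have "(\<Sum>u\<in>{1..l}. \<Sum>v\<in>{1..l}. aY i u * Sig u v * aY j v) = (\<Sum>u\<in>{1..l}. aY i u * ((1 - \<rho>) * aY j u + \<rho>))"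
    proof (rule sum.cong[OF refl])
      fix u assume u: "u \<in> {1..l}"
      have "(\<Sum>v\<in>{1..l}. aY i u * Sig u v * aY j v) = aY i u * (\<Sum>v\<in>{1..l}. Sig u v * aY j v)"
        by (simp add: sum_distrib_left mult.assoc)
      then show "(\<Sum>v\<in>{1..l}. aY i u * Sig u v * aY j v) = aY i u * ((1 - \<rho>) * aY j u + \<rho>)"
        using sumSig[OF u, of "aY j"] sum_aY1[OF j] by simp
    qed
    also have "\<dots> = A * ((1 - \<rho>) * aY j i + \<rho>) + B * (\<Sum>u\<in>{1..l}. (1 - \<rho>) * aY j u + \<rho>)"
      using sum_aY[OF i, of "\<lambda>u. (1 - \<rho>) * aY j u + \<rho>"] unfolding A_def B_def .
    also have "\<dots> = A * ((1 - \<rho>) * ((if i = j then A else 0) + B) + \<rho>) + B * ((1 - \<rho>) + real l * \<rho>)"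
    proof -
      have s1: "(\<Sum>u\<in>{1..l}. (1 - \<rho>) * aY j u + \<rho>) = (1 - \<rho>) + real l * \<rho>"
        using sum_aY1[OF j] by (simp add: sum.distrib sum_distrib_left[symmetric])
      have s2: "aY j i = (if i = j then A else 0) + B" unfolding aY_def A_def B_def by simp
      show ?thesis by (simp only: s1 s2)
    qed
    also have "\<dots> = (1 - \<rho>) * ((if i = j then A^2 else 0) + 2 * A * B + real l * B^2) + \<rho>"
    proof -
      have AB: "A = 1 - real l * B" unfolding A_def B_def by simp
      show ?thesis unfolding AB by (cases "i = j") (simp_all add: algebra_simps power2_eq_square)
    qed
    finally show ?thesis .
  qed
  have Bp: "(\<Sum>S\<in>Subs. \<Sum>j1<m. \<Sum>k<m. bY i S j1 * Mmat m j1 k * bY j S k) = \<alpha>^2 * \<gamma> * c * (if i = j then real l - 1 else - 1)"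
  proof -
    have "(\<Sum>S\<in>Subs. \<Sum>j1<m. \<Sum>k<m. bY i S j1 * Mmat m j1 k * bY j S k)
        = \<alpha>^2 * \<gamma> * (\<Sum>S\<in>Subs. if i \<in> S \<and> j \<in> S then (if j = i then real m - 1 else - 1) else 0)"
      by (simp add: bY_inner sum_distrib_left)
    also have "\<dots> = \<alpha>^2 * \<gamma> * (c * (if j = i then real l - 1 else - 1))" by (simp add: sum_pairs[OF i j])
    finally show ?thesis by auto
  qed
  show ?thesis unfolding bf_def X Bp A_def B_def ..
qed

end


context setting begin

lemma L_sum: "finite K \<Longrightarrow> L (\<lambda>v. \<Sum>k\<in>K. t k * a k v) (\<lambda>S j. \<Sum>k\<in>K. t k * b k S j) w = (\<Sum>k\<in>K. t k * L (a k) (b k) w)"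
  unfolding L_def
  by (simp add: distrib_left sum_distrib_left sum_distrib_right sum.distrib mult_ac sum.swap[of _ K])

lemma bf_sum2: "finite K \<Longrightarrow> bf a1 b1 (\<lambda>v. \<Sum>k\<in>K. t k * a k v) (\<lambda>S j. \<Sum>k\<in>K. t k * b k S j) = (\<Sum>k\<in>K. t k * bf a1 b1 (a k) (b k))"
  unfolding bf_def
  by (simp add: distrib_left sum_distrib_left sum_distrib_right sum.distrib mult_ac sum.swap[of _ K])

lemma bf_scale1: "bf (\<lambda>v. s * a v) (\<lambda>S j. s * b S j) a2 b2 = s * bf a b a2 b2"
  unfolding bf_def by (simp add: distrib_left sum_distrib_left mult_ac)

definition KK :: "(nat set \<times> nat) set" where "KK = Subs \<times> {..<m}"

lemma finite_KK: "finite KK" unfolding KK_def using finite_Subs by simp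

definition Yr :: "nat \<Rightarrow> 'a \<Rightarrow> real" where "Yr i w = X w i - Xhat i w"

definition aW :: "(nat set \<times> nat \<Rightarrow> real) \<Rightarrow> nat \<Rightarrow> real" where
  "aW t v = (\<Sum>k\<in>KK. t k * aU (fst k) (snd k) v)"
definition bW :: "(nat set \<times> nat \<Rightarrow> real) \<Rightarrow> nat set \<Rightarrow> nat \<Rightarrow> real" where
  "bW t S j = (\<Sum>k\<in>KK. t k * bU (fst k) (snd k) S j)"

lemma W_L: "(\<Sum>k\<in>KK. t k * U k w) = L (aW t) (bW t) w"
proof -
  have "(\<Sum>k\<in>KK. t k * U k w) = (\<Sum>k\<in>KK. t k * L (aU (fst k) (snd k)) (bU (fst k) (snd k)) w)"
    by (rule sum.cong) (auto simp: KK_def U_L)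
  also have "\<dots> = L (aW t) (bW t) w" unfolding aW_def bW_def by (rule L_sum[OF finite_KK, symmetric])
  finally show ?thesis .
qed

lemma char_factor:
  assumes i: "i \<in> {1..l}"
  shows "(\<integral>w. iexp (s * Yr i w + (\<Sum>k\<in>KK. t k * U k w)) \<partial>P)
    = (\<integral>w. iexp (s * Yr i w) \<partial>P) * (\<integral>w. iexp (\<Sum>k\<in>KK. t k * U k w) \<partial>P)"
proof -
  define a1 where "a1 v = s * aY i v" for v
  define b1 where "b1 S j = s * bY i S j" for S j
  have Y1: "s * Yr i w = L a1 b1 w" for w
    unfolding a1_def b1_def L_scale Yr_def Y_L[OF i] ..
  have orth: "bf a1 b1 (aW t) (bW t) = 0"
  proof -
    have "bf a1 b1 (aW t) (bW t) = (\<Sum>k\<in>KK. t k * bf a1 b1 (aU (fst k) (snd k)) (bU (fst k) (snd k)))"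
      unfolding aW_def bW_def by (rule bf_sum2[OF finite_KK])
    also have "\<dots> = 0"
      by (rule sum.neutral) (auto simp: KK_def a1_def[abs_def] b1_def[abs_def] bf_scale1 bf_YU[OF i])
    finally show ?thesis .
  qed
  have sum_eq: "s * Yr i w + (\<Sum>k\<in>KK. t k * U k w) = L (\<lambda>v. a1 v + aW t v) (\<lambda>S j. b1 S j + bW t S j) w" for w
    unfolding L_add Y1 W_L ..
  have "(\<integral>w. iexp (s * Yr i w + (\<Sum>k\<in>KK. t k * U k w)) \<partial>P) = complex_of_real (exp (- qf (\<lambda>v. a1 v + aW t v) (\<lambda>S j. b1 S j + bW t S j) / 2))"
    unfolding sum_eq by (rule charL)
  also have "\<dots> = complex_of_real (exp (- qf a1 b1 / 2)) * complex_of_real (exp (- qf (aW t) (bW t) / 2))"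
  proof -
    have "- qf (\<lambda>v. a1 v + aW t v) (\<lambda>S j. b1 S j + bW t S j) / 2 = - qf a1 b1 / 2 + - qf (aW t) (bW t) / 2"
      unfolding qf_add orth by simp
    then show ?thesis by (simp only: exp_add of_real_mult)
  qed
  also have "\<dots> = (\<integral>w. iexp (s * Yr i w) \<partial>P) * (\<integral>w. iexp (\<Sum>k\<in>KK. t k * U k w) \<partial>P)"
    unfolding Y1 W_L charL ..
  finally show ?thesis .
qed

end


lemma pp_mult:
  fixes f g :: "'a \<Rightarrow> complex"
  assumes M: "prob_space M" and [measurable]: "f \<in> borel_measurable M" "g \<in> borel_measurable M"
    and bf: "\<And>x. norm (f x) \<le> 1" and bg: "\<And>x. norm (g x) \<le> 1"
  shows "(\<integral>z. f (fst z) * g (snd z) \<partial>(M \<Otimes>\<^sub>M M)) = (\<integral>x. f x \<partial>M) * (\<integral>x. g x \<partial>M)"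
proof -
  interpret M: prob_space M by fact
  interpret pair_prob_space M M ..
  have fin: "finite_measure (M \<Otimes>\<^sub>M M)" by (rule finite_measure_pair_measure) unfold_locales
  have int: "integrable (M \<Otimes>\<^sub>M M) (\<lambda>z. f (fst z) * g (snd z))"
    by (rule finite_measure.integrable_const_bound[OF fin, where B=1]) (auto simp: norm_mult intro!: mult_le_one bf bg)
  have "(\<integral>z. f (fst z) * g (snd z) \<partial>(M \<Otimes>\<^sub>M M)) = (\<integral>x. (\<integral>y. f x * g y \<partial>M) \<partial>M)"
    using integral_fst'[OF int] by simp
  also have "\<dots> = (\<integral>x. f x * (\<integral>y. g y \<partial>M) \<partial>M)" by simp
  also have "\<dots> = (\<integral>x. f x \<partial>M) * (\<integral>x. g x \<partial>M)" by simp
  finally show ?thesis .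
qed

context setting begin

lemma Yr_meas[measurable]: "i \<in> {1..l} \<Longrightarrow> Yr i \<in> borel_measurable P"
proof -
  assume i: "i \<in> {1..l}"
  have "Yr i = L (aY i) (bY i)" using Y_L[OF i] unfolding Yr_def by auto
  then show ?thesis by simp
qed

lemma U_meas: "k \<in> KK \<Longrightarrow> U k \<in> borel_measurable P"
proof -
  assume k: "k \<in> KK"
  have "U k = L (aU (fst k) (snd k)) (bU (fst k) (snd k))" using U_L k unfolding KK_def by (auto simp: fun_eq_iff)
  then show ?thesis by simp
qed

lemma distr_fst_P: "distr (P \<Otimes>\<^sub>M P) P fst = P" by (rule distr_pair_fst)

lemma int_fst: "f \<in> borel_measurable P \<Longrightarrow> (\<integral>z. f (fst z) \<partial>(P \<Otimes>\<^sub>M P)) = (\<integral>x. f x \<partial>P)"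
  for f :: "'a \<Rightarrow> 'b::{banach,second_countable_topology}"
proof -
  assume [measurable]: "f \<in> borel_measurable P"
  have "(\<integral>x. f x \<partial>P) = (\<integral>x. f x \<partial>distr (P \<Otimes>\<^sub>M P) P fst)" by (simp only: distr_fst_P)
  also have "\<dots> = (\<integral>z. f (fst z) \<partial>(P \<Otimes>\<^sub>M P))" by (rule integral_distr) auto
  finally show ?thesis ..
qed

end


lemma prod_indicator_eq:
  "finite J \<Longrightarrow> (\<Prod>j\<in>J. indicator (A j) (Z j z) :: real) = indicator {z. \<forall>j\<in>J. Z j z \<in> A j} z"
proof (cases "\<forall>j\<in>J. Z j z \<in> A j")
  case True
  then show ?thesis by (simp add: indicator_def)
next
  case False
  then obtain j where "j \<in> J" "Z j z \<notin> A j" by blast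
  moreover assume "finite J"
  ultimately show ?thesis by (auto simp: indicator_def prod_zero_iff)
qed

lemma emeasure_box:
  fixes Q :: "'q measure" and Z :: "'j \<Rightarrow> 'q \<Rightarrow> real"
  assumes Q: "prob_space Q" and J: "finite J"
    and Zm: "\<And>j. j \<in> J \<Longrightarrow> Z j \<in> borel_measurable Q"
    and A: "\<And>j. j \<in> J \<Longrightarrow> A j \<in> sets borel"
  shows "emeasure (distr Q (PiM J (\<lambda>_. borel)) (\<lambda>z. \<lambda>j\<in>J. Z j z)) (Pi\<^sub>E J A)
    = ennreal (\<integral>z. (\<Prod>j\<in>J. indicator (A j) (Z j z)) \<partial>Q)"
proof -
  interpret Q: prob_space Q by fact
  have mm: "(\<lambda>z. \<lambda>j\<in>J. Z j z) \<in> measurable Q (PiM J (\<lambda>_. borel))"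
    by (rule measurable_restrict) (rule Zm)
  have PA: "Pi\<^sub>E J A \<in> sets (PiM J (\<lambda>_. borel))" using A by (intro sets_PiM_I_finite J) auto
  define S where "S = (\<lambda>z. \<lambda>j\<in>J. Z j z) -` Pi\<^sub>E J A \<inter> space Q"
  have S: "S \<in> sets Q" unfolding S_def using measurable_sets[OF mm PA] .
  have "emeasure (distr Q (PiM J (\<lambda>_. borel)) (\<lambda>z. \<lambda>j\<in>J. Z j z)) (Pi\<^sub>E J A) = emeasure Q S"
    unfolding S_def by (rule emeasure_distr[OF mm PA])
  also have "\<dots> = ennreal (measure Q S)" by (rule Q.emeasure_eq_measure)
  also have "measure Q S = (\<integral>z. indicator S z \<partial>Q)" using S by (simp add: Int_absorb2 sets.sets_into_space)
  also have "\<dots> = (\<integral>z. (\<Prod>j\<in>J. indicator (A j) (Z j z)) \<partial>Q)"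
  proof (rule Bochner_Integration.integral_cong[OF refl])
    fix z assume z: "z \<in> space Q"
    have "indicator S z = (indicator {z. \<forall>j\<in>J. Z j z \<in> A j} z :: real)"
      using z unfolding S_def by (auto simp: indicator_def PiE_iff)
    then show "indicator S z = (\<Prod>j\<in>J. indicator (A j) (Z j z) :: real)" by (simp add: prod_indicator_eq[OF J])
  qed
  finally show ?thesis .
qed

lemma distr_eq_from_boxes:
  fixes Q :: "'q measure" and Z1 Z2 :: "'j \<Rightarrow> 'q \<Rightarrow> real"
  assumes Q: "prob_space Q" and J: "finite J"
    and m1: "\<And>j. j \<in> J \<Longrightarrow> Z1 j \<in> borel_measurable Q"
    and m2: "\<And>j. j \<in> J \<Longrightarrow> Z2 j \<in> borel_measurable Q"
    and ch: "\<And>t. (\<integral>x. iexp (\<Sum>j\<in>J. t j * Z1 j x) \<partial>Q) = (\<integral>x. iexp (\<Sum>j\<in>J. t j * Z2 j x) \<partial>Q)"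
  shows "distr Q (PiM J (\<lambda>_. borel)) (\<lambda>z. \<lambda>j\<in>J. Z1 j z) = distr Q (PiM J (\<lambda>_. borel)) (\<lambda>z. \<lambda>j\<in>J. Z2 j z)"
proof (rule measure_eqI_PiM_finite[OF J])
  show "sets (distr Q (PiM J (\<lambda>_. borel)) (\<lambda>z. \<lambda>j\<in>J. Z1 j z)) = sets (PiM J (\<lambda>_. borel))" by simp
  show "sets (distr Q (PiM J (\<lambda>_. borel)) (\<lambda>z. \<lambda>j\<in>J. Z2 j z)) = sets (PiM J (\<lambda>_. borel))" by simp
  fix A :: "'j \<Rightarrow> real set" assume A: "\<And>j. j \<in> J \<Longrightarrow> A j \<in> sets borel"
  show "emeasure (distr Q (PiM J (\<lambda>_. borel)) (\<lambda>z. \<lambda>j\<in>J. Z1 j z)) (Pi\<^sub>E J A)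
      = emeasure (distr Q (PiM J (\<lambda>_. borel)) (\<lambda>z. \<lambda>j\<in>J. Z2 j z)) (Pi\<^sub>E J A)"
  proof -
    have "(\<integral>x. (\<Prod>j\<in>J. indicator (A j) (Z1 j x) :: real) \<partial>Q) = (\<integral>x. (\<Prod>j\<in>J. indicator (A j) (Z2 j x) :: real) \<partial>Q)"
      by (rule uniq_multi[OF Q J m1 m2 ch]) (auto simp: A)
    moreover have "emeasure (distr Q (PiM J (\<lambda>_. borel)) (\<lambda>z. \<lambda>j\<in>J. Z1 j z)) (Pi\<^sub>E J A)
      = ennreal (\<integral>z. (\<Prod>j\<in>J. indicator (A j) (Z1 j z)) \<partial>Q)"
      by (rule emeasure_box[OF Q J]) (auto simp: m1 A)
    moreover have "emeasure (distr Q (PiM J (\<lambda>_. borel)) (\<lambda>z. \<lambda>j\<in>J. Z2 j z)) (Pi\<^sub>E J A)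
      = ennreal (\<integral>z. (\<Prod>j\<in>J. indicator (A j) (Z2 j z)) \<partial>Q)"
      by (rule emeasure_box[OF Q J]) (auto simp: m2 A)
    ultimately show ?thesis by simp
  qed
next
  interpret Q: prob_space Q by fact
  interpret D: prob_space "distr Q (PiM J (\<lambda>_. borel)) (\<lambda>z. \<lambda>j\<in>J. Z1 j z)"
    by (rule Q.prob_space_distr) (rule measurable_restrict, rule m1)
  show "range (\<lambda>_. space (PiM J (\<lambda>_. borel :: real measure))) \<subseteq> prod_algebra J (\<lambda>_. borel)"
    using space_in_prod_algebra[of J "\<lambda>_. borel :: real measure"] by (auto simp: space_PiM)
  show "(\<Union>i::nat. space (PiM J (\<lambda>_. borel :: real measure))) = space (PiM J (\<lambda>_. borel))" by simp
  show "emeasure (distr Q (PiM J (\<lambda>_. borel)) (\<lambda>z. \<lambda>j\<in>J. Z1 j z)) (space (PiM J (\<lambda>_. borel))) \<noteq> \<infinity>" for i :: nat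
    using D.emeasure_space_1 by simp
qed


context setting begin

definition omega :: "'a \<Rightarrow> (nat set \<times> nat \<Rightarrow> real)" where "omega w = (\<lambda>k\<in>KK. U k w)"

lemma omega_meas: "omega \<in> measurable P (PiM KK (\<lambda>_. borel))"
  unfolding omega_def by (rule measurable_restrict) (rule U_meas)

lemma Yr_int: "i \<in> {1..l} \<Longrightarrow> integrable P (Yr i) \<and> (\<integral>w. Yr i w \<partial>P) = 0"
proof -
  assume i: "i \<in> {1..l}"
  have "Yr i = L (aY i) (bY i)" using Y_L[OF i] unfolding Yr_def by auto
  then show ?thesis using L_moments[of "aY i" "bY i"] by simp
qed

lemma indep_Y:
  assumes i: "i \<in> {1..l}" and C: "C \<in> sets (PiM KK (\<lambda>_. borel :: real measure))"
  shows "(\<integral>w. Yr i w * indicator C (omega w) \<partial>P) = 0"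
proof -
  note Um[measurable] = U_meas
  have [simp]: "Suc 0 \<le> i" "i \<le> l" using i by auto
  define Q where "Q = P \<Otimes>\<^sub>M P"
  interpret PP: pair_prob_space P P ..
  have Qp: "prob_space Q" unfolding Q_def by (rule PP.P.prob_space_axioms)
  define J where "J = insert None (Some ` KK)"
  have J: "finite J" unfolding J_def using finite_KK by simp
  define Z1 :: "(nat set \<times> nat) option \<Rightarrow> 'a \<times> 'a \<Rightarrow> real"
    where "Z1 j z = (case j of None \<Rightarrow> Yr i (fst z) | Some k \<Rightarrow> U k (fst z))" for j z
  define Z2 :: "(nat set \<times> nat) option \<Rightarrow> 'a \<times> 'a \<Rightarrow> real"
    where "Z2 j z = (case j of None \<Rightarrow> Yr i (fst z) | Some k \<Rightarrow> U k (snd z))" for j z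
  have m1: "Z1 j \<in> borel_measurable Q" if "j \<in> J" for j
  proof (cases j)
    case None then show ?thesis unfolding Z1_def Q_def using Yr_meas[OF i] by simp
  next
    case (Some k)
    then have "k \<in> KK" using that unfolding J_def by auto
    then show ?thesis unfolding Z1_def Q_def Some using U_meas by simp
  qed
  have m2: "Z2 j \<in> borel_measurable Q" if "j \<in> J" for j
  proof (cases j)
    case None then show ?thesis unfolding Z2_def Q_def using Yr_meas[OF i] by simp
  next
    case (Some k)
    then have "k \<in> KK" using that unfolding J_def by auto
    then show ?thesis unfolding Z2_def Q_def Some using U_meas by simp
  qed
  have sumJ: "(\<Sum>j\<in>J. t j * Z j z) = t None * Z None z + (\<Sum>k\<in>KK. t (Some k) * Z (Some k) z)"
    for t and Z :: "(nat set \<times> nat) option \<Rightarrow> 'a \<times> 'a \<Rightarrow> real" and z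
    unfolding J_def using finite_KK by (simp add: sum.reindex)
  have Wm: "(\<lambda>w. \<Sum>k\<in>KK. t k * U k w) \<in> borel_measurable P" for t
    by (rule borel_measurable_sum) (use U_meas in measurable)
  have ch: "(\<integral>z. iexp (\<Sum>j\<in>J. t j * Z1 j z) \<partial>Q) = (\<integral>z. iexp (\<Sum>j\<in>J. t j * Z2 j z) \<partial>Q)" for t
  proof -
    have "(\<integral>z. iexp (\<Sum>j\<in>J. t j * Z1 j z) \<partial>Q) = (\<integral>z. iexp (t None * Yr i (fst z) + (\<Sum>k\<in>KK. t (Some k) * U k (fst z))) \<partial>Q)"
    proof -
      have "(\<Sum>j\<in>J. t j * Z1 j z) = t None * Yr i (fst z) + (\<Sum>k\<in>KK. t (Some k) * U k (fst z))" for z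
        using sumJ[of t Z1 z] by (simp add: Z1_def)
      then show ?thesis by (simp only:)
    qed
    also have "\<dots> = (\<integral>w. iexp (t None * Yr i w + (\<Sum>k\<in>KK. t (Some k) * U k w)) \<partial>P)"
      unfolding Q_def by (rule int_fst) (use Yr_meas[OF i] Wm in measurable)
    also have "\<dots> = (\<integral>w. iexp (t None * Yr i w) \<partial>P) * (\<integral>w. iexp (\<Sum>k\<in>KK. t (Some k) * U k w) \<partial>P)"
      by (rule char_factor[OF i])
    also have "\<dots> = (\<integral>z. iexp (t None * Yr i (fst z)) * iexp (\<Sum>k\<in>KK. t (Some k) * U k (snd z)) \<partial>Q)"
    proof -
      have a1: "(\<lambda>x. iexp (t None * Yr i x)) \<in> borel_measurable P" by measurable
      have a2': "(\<lambda>x. \<Sum>k\<in>KK. t (Some k) * U k x) \<in> borel_measurable P" by (rule Wm)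
      have a2: "(\<lambda>x. iexp (\<Sum>k\<in>KK. t (Some k) * U k x)) \<in> borel_measurable P" using a2' by measurable
      show ?thesis unfolding Q_def
        by (rule pp_mult[symmetric, OF prob_space_axioms a1 a2]) (simp_all add: norm_exp_i_times del: of_real_mult of_real_sum)
    qed
    also have "\<dots> = (\<integral>z. iexp (\<Sum>j\<in>J. t j * Z2 j z) \<partial>Q)"
    proof -
      have "(\<Sum>j\<in>J. t j * Z2 j z) = t None * Yr i (fst z) + (\<Sum>k\<in>KK. t (Some k) * U k (snd z))" for z
        using sumJ[of t Z2 z] by (simp add: Z2_def)
      then show ?thesis by (simp only: iexp_add)
    qed
    finally show ?thesis .
  qed
  have deq: "distr Q (PiM J (\<lambda>_. borel)) (\<lambda>z. \<lambda>j\<in>J. Z1 j z) = distr Q (PiM J (\<lambda>_. borel)) (\<lambda>z. \<lambda>j\<in>J. Z2 j z)"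
    by (rule distr_eq_from_boxes[OF Qp J _ _ ch]) (auto simp: m1 m2)
  define g where "g v = v None * indicator C (\<lambda>k\<in>KK. v (Some k))" for v :: "(nat set \<times> nat) option \<Rightarrow> real"
  have gm: "g \<in> borel_measurable (PiM J (\<lambda>_. borel))"
  proof -
    have 1: "(\<lambda>v. v None) \<in> borel_measurable (PiM J (\<lambda>_. borel :: real measure))"
      by (rule measurable_component_singleton) (simp add: J_def)
    have 2: "(\<lambda>v. \<lambda>k\<in>KK. v (Some k)) \<in> measurable (PiM J (\<lambda>_. borel :: real measure)) (PiM KK (\<lambda>_. borel))"
      by (rule measurable_restrict) (rule measurable_component_singleton, simp add: J_def)
    have 3: "(\<lambda>v. indicator C (\<lambda>k\<in>KK. v (Some k)) :: real) \<in> borel_measurable (PiM J (\<lambda>_. borel :: real measure))"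
      by (rule measurable_compose[OF 2 borel_measurable_indicator[OF C]])
    show ?thesis unfolding g_def using 1 3 by measurable
  qed
  have g1: "g (\<lambda>j\<in>J. Z1 j z) = Yr i (fst z) * indicator C (omega (fst z))" for z
  proof -
    have "(\<lambda>k\<in>KK. (\<lambda>j\<in>J. Z1 j z) (Some k)) = omega (fst z)"
      unfolding omega_def by (rule restrict_ext) (simp add: J_def Z1_def)
    then show ?thesis unfolding g_def by (simp add: J_def Z1_def)
  qed
  have g2: "g (\<lambda>j\<in>J. Z2 j z) = Yr i (fst z) * indicator C (omega (snd z))" for z
  proof -
    have "(\<lambda>k\<in>KK. (\<lambda>j\<in>J. Z2 j z) (Some k)) = omega (snd z)"
      unfolding omega_def by (rule restrict_ext) (simp add: J_def Z2_def)
    then show ?thesis unfolding g_def by (simp add: J_def Z2_def)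
  qed
  have mm1: "(\<lambda>z. \<lambda>j\<in>J. Z1 j z) \<in> measurable Q (PiM J (\<lambda>_. borel))" by (rule measurable_restrict) (rule m1)
  have mm2: "(\<lambda>z. \<lambda>j\<in>J. Z2 j z) \<in> measurable Q (PiM J (\<lambda>_. borel))" by (rule measurable_restrict) (rule m2)
  have indm: "(\<lambda>w. indicator C (omega w) :: real) \<in> borel_measurable P"
    by (rule measurable_compose[OF omega_meas borel_measurable_indicator[OF C]])
  have "(\<integral>w. Yr i w * indicator C (omega w) \<partial>P) = (\<integral>z. Yr i (fst z) * indicator C (omega (fst z)) \<partial>Q)"
    unfolding Q_def by (rule int_fst[symmetric]) (use Yr_meas[OF i] indm in measurable)
  also have "\<dots> = (\<integral>z. g (\<lambda>j\<in>J. Z1 j z) \<partial>Q)" unfolding g1 ..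
  also have "\<dots> = (\<integral>v. g v \<partial>distr Q (PiM J (\<lambda>_. borel)) (\<lambda>z. \<lambda>j\<in>J. Z1 j z))"
    by (rule integral_distr[OF mm1 gm, symmetric])
  also have "\<dots> = (\<integral>v. g v \<partial>distr Q (PiM J (\<lambda>_. borel)) (\<lambda>z. \<lambda>j\<in>J. Z2 j z))" unfolding deq ..
  also have "\<dots> = (\<integral>z. g (\<lambda>j\<in>J. Z2 j z) \<partial>Q)" by (rule integral_distr[OF mm2 gm])
  also have "\<dots> = (\<integral>z. Yr i (fst z) * indicator C (omega (snd z)) \<partial>Q)" unfolding g2 ..
  also have "\<dots> = 0"
  proof -
    have iY: "integrable P (Yr i)" and eY: "(\<integral>w. Yr i w \<partial>P) = 0" using Yr_int[OF i] by auto
    have iYQ: "integrable Q (\<lambda>z. Yr i (fst z))"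
    proof -
      have "integrable (distr Q P fst) (Yr i)" unfolding Q_def distr_fst_P by (rule iY)
      then show ?thesis unfolding Q_def by (subst (asm) integrable_distr_eq) (use Yr_meas[OF i] in auto)
    qed
    define S where "S = {z \<in> space Q. omega (snd z) \<in> C}"
    have S: "S \<in> sets Q" unfolding S_def Q_def
      using measurable_sets[OF measurable_compose[OF measurable_snd omega_meas] C] by (simp add: vimage_def Int_def conj_commute)
    have int: "integrable (P \<Otimes>\<^sub>M P) (\<lambda>z. Yr i (fst z) * indicator C (omega (snd z)))"
    proof -
      have iS: "integrable Q (\<lambda>z. indicator S z * Yr i (fst z))" using integrable_mult_indicator[OF S iYQ] by simp
      have eqf: "indicator S z * Yr i (fst z) = Yr i (fst z) * indicator C (omega (snd z))" if "z \<in> space Q" for z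
        using that unfolding S_def by (auto simp: indicator_def)
      have "integrable Q (\<lambda>z. Yr i (fst z) * indicator C (omega (snd z)))"
        by (rule Bochner_Integration.integrable_cong[where M=Q and N=Q and f="\<lambda>z. indicator S z * Yr i (fst z)", THEN iffD1, OF refl eqf iS])
      then show ?thesis unfolding Q_def .
    qed
    have "(\<integral>z. Yr i (fst z) * indicator C (omega (snd z)) \<partial>Q) = (\<integral>x. (\<integral>y. Yr i x * indicator C (omega y) \<partial>P) \<partial>P)"
      unfolding Q_def using PP.integral_fst'[OF int] by simp
    also have "\<dots> = (\<integral>x. Yr i x * (\<integral>y. indicator C (omega y) \<partial>P) \<partial>P)" by simp
    also have "\<dots> = 0" using eY by simp
    finally show ?thesis .
  qed
  finally show ?thesis .
qed

end


context setting begin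

lemma alg_aux:
  shows "\<alpha>^2 * \<gamma> = \<alpha> * (1 - \<rho>) - \<alpha>^2 * (1 - \<rho>) * c * real l"
    and "c * (real l - 1) * (1 - \<rho>)\<^sup>2 / (\<gamma> + c * real l * (1 - \<rho>)) = c * (real l - 1) * (1 - \<rho>) * \<alpha>"
    and "c * (1 - \<rho>)\<^sup>2 / (\<gamma> + c * real l * (1 - \<rho>)) = c * (1 - \<rho>) * \<alpha>"
proof -
  have "\<alpha> * \<gamma> = (1 - \<rho>) - \<alpha> * (1 - \<rho>) * c * real l" using alpha_eq by (simp add: algebra_simps)
  then have "\<alpha> * (\<alpha> * \<gamma>) = \<alpha> * ((1 - \<rho>) - \<alpha> * (1 - \<rho>) * c * real l)" by simp
  then show "\<alpha>^2 * \<gamma> = \<alpha> * (1 - \<rho>) - \<alpha>^2 * (1 - \<rho>) * c * real l" by (simp add: algebra_simps power2_eq_square)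
  have D: "\<gamma> + c * real l * (1 - \<rho>) = (1 - \<rho>) * c * real l + \<gamma>" by (simp add: algebra_simps)
  show "c * (real l - 1) * (1 - \<rho>)\<^sup>2 / (\<gamma> + c * real l * (1 - \<rho>)) = c * (real l - 1) * (1 - \<rho>) * \<alpha>"
    unfolding D \<alpha>_def by (simp add: power2_eq_square)
  show "c * (1 - \<rho>)\<^sup>2 / (\<gamma> + c * real l * (1 - \<rho>)) = c * (1 - \<rho>) * \<alpha>"
    unfolding D \<alpha>_def by (simp add: power2_eq_square)
qed

lemma alg_diag: "(1 - \<rho>) * ((1 - \<alpha> * c * real l)^2 + 2 * (1 - \<alpha> * c * real l) * (\<alpha> * c) + real l * (\<alpha> * c)^2)
      + \<rho> + \<alpha>^2 * \<gamma> * c * (real l - 1)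
    = 1 - c * (real l - 1) * (1 - \<rho>)\<^sup>2 / (\<gamma> + c * real l * (1 - \<rho>))"
proof -
  have e: "\<alpha>^2 * \<gamma> * c * (real l - 1) = (\<alpha> * (1 - \<rho>) - \<alpha>^2 * (1 - \<rho>) * c * real l) * c * (real l - 1)"
    using alg_aux(1) by simp
  show ?thesis unfolding e alg_aux(2) by (simp add: algebra_simps power2_eq_square)
qed

lemma alg_off: "(1 - \<rho>) * (0 + 2 * (1 - \<alpha> * c * real l) * (\<alpha> * c) + real l * (\<alpha> * c)^2)
      + \<rho> + \<alpha>^2 * \<gamma> * c * (- 1)
    = \<rho> + c * (1 - \<rho>)\<^sup>2 / (\<gamma> + c * real l * (1 - \<rho>))"
proof -
  have e: "\<alpha>^2 * \<gamma> * c * (- 1) = - ((\<alpha> * (1 - \<rho>) - \<alpha>^2 * (1 - \<rho>) * c * real l) * c)"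
    using alg_aux(1) by simp
  show ?thesis unfolding e alg_aux(3) by (simp add: algebra_simps power2_eq_square)
qed

end


context setting begin

definition gens :: "'a set set" where
  "gens = {U k -` B \<inter> space P | k B. k \<in> KK \<and> B \<in> sets (borel :: real measure)}"

definition G :: "'a measure" where "G = gen_sigma P U KK"

lemma gens_sub: "gens \<subseteq> Pow (space P)" unfolding gens_def by auto

lemma gens_sets: "gens \<subseteq> sets P"
  unfolding gens_def using U_meas measurable_sets by blast

lemma G_eq: "G = sigma (space P) gens" unfolding G_def gen_sigma_def gens_def ..

lemma sets_G: "sets G = sigma_sets (space P) gens" unfolding G_eq by (rule sets_measure_of[OF gens_sub])

lemma space_G: "space G = space P" unfolding G_eq by (rule space_measure_of[OF gens_sub])

lemma subalg: "subalgebra P G"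
  unfolding subalgebra_def space_G sets_G
  using sets.sigma_sets_subset[OF gens_sets] by simp

lemma sfs: "sigma_finite_subalgebra P G"
  by (rule finite_measure_subalgebra_is_sigma_finite) (unfold_locales, rule subalg)

lemma U_measG: "k \<in> KK \<Longrightarrow> U k \<in> borel_measurable G"
proof (rule measurableI)
  fix B :: "real set" assume k: "k \<in> KK" and B: "B \<in> sets borel"
  have "U k -` B \<inter> space P \<in> gens" unfolding gens_def using k B by blast
  then show "U k -` B \<inter> space G \<in> sets G" unfolding sets_G space_G by (rule sigma_sets.Basic)
qed simp

lemma G_vimage: "A \<in> sets G \<Longrightarrow> \<exists>C\<in>sets (PiM KK (\<lambda>_. borel :: real measure)). A = omega -` C \<inter> space P"
proof -
  assume A: "A \<in> sets G"
  define V where "V = vimage_algebra (space P) omega (PiM KK (\<lambda>_. borel :: real measure))"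
  have om: "omega \<in> space P \<rightarrow> space (PiM KK (\<lambda>_. borel :: real measure))"
    using measurable_space[OF omega_meas] by blast
  have sV: "sets V = {omega -` C \<inter> space P | C. C \<in> sets (PiM KK (\<lambda>_. borel :: real measure))}"
    unfolding V_def by (rule sets_vimage_algebra2[OF om])
  have "gens \<subseteq> sets V"
  proof
    fix X assume "X \<in> gens"
    then obtain k B where k: "k \<in> KK" and B: "B \<in> sets (borel :: real measure)" and X: "X = U k -` B \<inter> space P"
      unfolding gens_def by blast
    define C where "C = (\<lambda>v. v k) -` B \<inter> space (PiM KK (\<lambda>_. borel :: real measure))"
    have C: "C \<in> sets (PiM KK (\<lambda>_. borel :: real measure))"
      unfolding C_def by (rule measurable_sets[OF measurable_component_singleton[OF k] B])
    have "X = omega -` C \<inter> space P"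
      unfolding X C_def using om k by (auto simp: omega_def)
    then show "X \<in> sets V" unfolding sV using C by blast
  qed
  then have "sigma_sets (space P) gens \<subseteq> sets V"
    using sets.sigma_sets_subset[of gens V] by (simp add: V_def)
  then show ?thesis using A unfolding sets_G sV by blast
qed

end


context setting begin

lemma X_L: "i \<in> {1..l} \<Longrightarrow> X w i = L (\<lambda>v. if v = i then 1 else 0) (\<lambda>S j. 0) w"
proof -
  assume i: "i \<in> {1..l}"
  have "(\<Sum>v\<in>{1..l}. (if v = i then 1 else 0) * X w v) = (\<Sum>v\<in>{1..l}. if v = i then X w v else 0)"
    by (rule sum.cong) auto
  also have "\<dots> = X w i" using i by simp
  finally show ?thesis unfolding L_def by simp
qed

lemma X_int: "i \<in> {1..l} \<Longrightarrow> integrable P (\<lambda>w. X w i)"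
proof -
  assume i: "i \<in> {1..l}"
  have "(\<lambda>w. X w i) = L (\<lambda>v. if v = i then 1 else 0) (\<lambda>S j. 0)" using X_L[OF i] by auto
  then show ?thesis using L_moments by simp
qed

lemma Xhat_int: "i \<in> {1..l} \<Longrightarrow> integrable P (Xhat i)"
proof -
  assume i: "i \<in> {1..l}"
  have "Xhat i = (\<lambda>w. X w i - Yr i w)" by (auto simp: Yr_def)
  then show ?thesis using X_int[OF i] Yr_int[OF i] by simp
qed

lemma Xhat_measG: "Xhat i \<in> borel_measurable G"
proof -
  have 1: "(\<lambda>w. if b then U k w else 0) \<in> borel_measurable G" if "k \<in> KK" for b k
    by (cases b) (simp_all add: U_measG[OF that])
  have "(\<lambda>w. \<Sum>S\<in>Subs. \<Sum>j<m. (if elem_of S j = i then U (S, j) w else 0)) \<in> borel_measurable G"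
    by (intro borel_measurable_sum 1) (auto simp: KK_def)
  then show ?thesis unfolding Xhat_def[abs_def] by measurable
qed

lemma condexp: "i \<in> {1..l} \<Longrightarrow> AE w in P. real_cond_exp P G (\<lambda>w. X w i) w = Xhat i w"
proof -
  assume i: "i \<in> {1..l}"
  show ?thesis
  proof (rule sigma_finite_subalgebra.real_cond_exp_charact[OF sfs])
    fix A assume A: "A \<in> sets G"
    then obtain C where C: "C \<in> sets (PiM KK (\<lambda>_. borel :: real measure))" and AC: "A = omega -` C \<inter> space P"
      using G_vimage by blast
    have AP: "A \<in> sets P" using A subalg unfolding subalgebra_def by blast
    have "(\<integral>x\<in>A. X x i \<partial>P) - (\<integral>x\<in>A. Xhat i x \<partial>P) = (\<integral>x. indicator A x * X x i - indicator A x * Xhat i x \<partial>P)"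
      unfolding set_lebesgue_integral_def
      using Bochner_Integration.integral_diff[OF integrable_mult_indicator[OF AP X_int[OF i]] integrable_mult_indicator[OF AP Xhat_int[OF i]]]
      by simp
    also have "\<dots> = (\<integral>x. Yr i x * indicator C (omega x) \<partial>P)"
      by (rule Bochner_Integration.integral_cong[OF refl]) (auto simp: AC Yr_def indicator_def)
    also have "\<dots> = 0" by (rule indep_Y[OF i C])
    finally show "(\<integral>x\<in>A. X x i \<partial>P) = (\<integral>x\<in>A. Xhat i x \<partial>P)" by simp
  qed (use X_int[OF i] Xhat_int[OF i] Xhat_measG in auto)
qed

lemma err: assumes i: "i \<in> {1..l}" and j: "j \<in> {1..l}"
  shows "(\<integral>w. (X w i - real_cond_exp P G (\<lambda>w. X w i) w) * (X w j - real_cond_exp P G (\<lambda>w. X w j) w) \<partial>P)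
    = bf (aY i) (bY i) (aY j) (bY j)"
proof -
  have m: "real_cond_exp P G f \<in> borel_measurable P" for f
    by (rule borel_measurable_cond_exp2)
  have "(\<integral>w. (X w i - real_cond_exp P G (\<lambda>w. X w i) w) * (X w j - real_cond_exp P G (\<lambda>w. X w j) w) \<partial>P)
      = (\<integral>w. L (aY i) (bY i) w * L (aY j) (bY j) w \<partial>P)"
  proof (rule integral_cong_AE)
    show "(\<lambda>w. (X w i - real_cond_exp P G (\<lambda>w. X w i) w) * (X w j - real_cond_exp P G (\<lambda>w. X w j) w)) \<in> borel_measurable P"
      using m[of "\<lambda>w. X w i"] m[of "\<lambda>w. X w j"] i j by measurable
    show "(\<lambda>w. L (aY i) (bY i) w * L (aY j) (bY j) w) \<in> borel_measurable P" by measurable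
    show "AE w in P. (X w i - real_cond_exp P G (\<lambda>w. X w i) w) * (X w j - real_cond_exp P G (\<lambda>w. X w j) w) = L (aY i) (bY i) w * L (aY j) (bY j) w"
      using condexp[OF i] condexp[OF j] by eventually_elim (simp add: Y_L[OF i, symmetric] Y_L[OF j, symmetric])
  qed
  also have "\<dots> = bf (aY i) (bY i) (aY j) (bY j)" using L_prod by blast
  finally show ?thesis .
qed

lemma main:
  shows "(\<forall>i\<in>{1..l}.
            (\<integral>w. (X w i - real_cond_exp P G (\<lambda>w. X w i) w)\<^sup>2 \<partial>P)
            = 1 - real ((l - 2) choose (m - 2)) * (real l - 1) * (1 - \<rho>)\<^sup>2
                  / (\<gamma> + real ((l - 2) choose (m - 2)) * real l * (1 - \<rho>)))
       \<and> (\<forall>i\<in>{1..l}. \<forall>j\<in>{1..l}. i \<noteq> j \<longrightarrow>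
            (\<integral>w. (X w i - real_cond_exp P G (\<lambda>w. X w i) w)
                 * (X w j - real_cond_exp P G (\<lambda>w. X w j) w) \<partial>P)
            = \<rho> + real ((l - 2) choose (m - 2)) * (1 - \<rho>)\<^sup>2
                  / (\<gamma> + real ((l - 2) choose (m - 2)) * real l * (1 - \<rho>)))"
proof (intro conjI ballI impI)
  fix i assume i: "i \<in> {1..l}"
  have "(\<integral>w. (X w i - real_cond_exp P G (\<lambda>w. X w i) w)\<^sup>2 \<partial>P)
      = (\<integral>w. (X w i - real_cond_exp P G (\<lambda>w. X w i) w) * (X w i - real_cond_exp P G (\<lambda>w. X w i) w) \<partial>P)"
    by (simp add: power2_eq_square)
  also have "\<dots> = bf (aY i) (bY i) (aY i) (bY i)" by (rule err[OF i i])
  also have "\<dots> = 1 - c * (real l - 1) * (1 - \<rho>)\<^sup>2 / (\<gamma> + c * real l * (1 - \<rho>))"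
    unfolding bf_YY[OF i i] using alg_diag by simp
  finally show "(\<integral>w. (X w i - real_cond_exp P G (\<lambda>w. X w i) w)\<^sup>2 \<partial>P)
            = 1 - real ((l - 2) choose (m - 2)) * (real l - 1) * (1 - \<rho>)\<^sup>2
                  / (\<gamma> + real ((l - 2) choose (m - 2)) * real l * (1 - \<rho>))" unfolding c_def .
next
  fix i j assume i: "i \<in> {1..l}" and j: "j \<in> {1..l}" and ij: "i \<noteq> j"
  have "(\<integral>w. (X w i - real_cond_exp P G (\<lambda>w. X w i) w) * (X w j - real_cond_exp P G (\<lambda>w. X w j) w) \<partial>P)
      = bf (aY i) (bY i) (aY j) (bY j)" by (rule err[OF i j])
  also have "\<dots> = \<rho> + c * (1 - \<rho>)\<^sup>2 / (\<gamma> + c * real l * (1 - \<rho>))"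
    unfolding bf_YY[OF i j] using alg_off ij by simp
  finally show "(\<integral>w. (X w i - real_cond_exp P G (\<lambda>w. X w i) w)
                 * (X w j - real_cond_exp P G (\<lambda>w. X w j) w) \<partial>P)
            = \<rho> + real ((l - 2) choose (m - 2)) * (1 - \<rho>)\<^sup>2
                  / (\<gamma> + real ((l - 2) choose (m - 2)) * real l * (1 - \<rho>))" unfolding c_def .
qed

end

theorem proposition4:
  fixes P :: "'a measure"
    and l m :: nat and \<rho> \<gamma> :: real
    and X :: "'a \<Rightarrow> nat \<Rightarrow> real"
    and N :: "nat set \<Rightarrow> 'a \<Rightarrow> nat \<Rightarrow> real"
    and U :: "nat set \<times> nat \<Rightarrow> 'a \<Rightarrow> real"
    and Subs :: "nat set set"
  assumes "prob_space P"
    and "l \<ge> 2"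
    and "- 1 / (real l - 1) < \<rho>" and "\<rho> < 1"
    and "2 \<le> m" and "m \<le> l"
    and "\<gamma> > 0"
    and Subs_def: "Subs = {S. S \<subseteq> {1..l} \<and> card S = m}"
    and X_gauss: "gaussian_vec P {1..l} X (\<lambda>i j. if i = j then 1 else \<rho>)"
    and N_gauss: "\<forall>S\<in>Subs. gaussian_vec P {..<m} (N S) (Mmat m)"
    and indep: "prob_space.indep_vars P
        (\<lambda>k. case k of None \<Rightarrow> PiM {1..l} (\<lambda>_. borel) | Some S \<Rightarrow> PiM {..<m} (\<lambda>_. borel))
        (\<lambda>k w. case k of None \<Rightarrow> restrict (X w) {1..l} | Some S \<Rightarrow> restrict (N S w) {..<m})
        (insert None (Some ` Subs))"
    and U_def: "\<forall>S\<in>Subs. \<forall>j<m. U (S, j) =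
        (\<lambda>w. (\<Sum>k<m. Mmat m j k * X w (elem_of S k)) + sqrt \<gamma> * N S w j)"
  shows "(\<forall>i\<in>{1..l}.
            (\<integral>w. (X w i - real_cond_exp P (gen_sigma P U (Subs \<times> {..<m})) (\<lambda>w. X w i) w)\<^sup>2 \<partial>P)
            = 1 - real ((l - 2) choose (m - 2)) * (real l - 1) * (1 - \<rho>)\<^sup>2
                  / (\<gamma> + real ((l - 2) choose (m - 2)) * real l * (1 - \<rho>)))
       \<and> (\<forall>i\<in>{1..l}. \<forall>j\<in>{1..l}. i \<noteq> j \<longrightarrow>
            (\<integral>w. (X w i - real_cond_exp P (gen_sigma P U (Subs \<times> {..<m})) (\<lambda>w. X w i) w)
                 * (X w j - real_cond_exp P (gen_sigma P U (Subs \<times> {..<m})) (\<lambda>w. X w j) w) \<partial>P)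
            = \<rho> + real ((l - 2) choose (m - 2)) * (1 - \<rho>)\<^sup>2
                  / (\<gamma> + real ((l - 2) choose (m - 2)) * real l * (1 - \<rho>)))"
proof -
  have st: "setting P l m \<rho> \<gamma> X N U Subs"
    unfolding setting_def setting_axioms_def
    by (intro conjI; fact)
  interpret S: setting P l m \<rho> \<gamma> X N U Subs by (rule st)
  have "gen_sigma P U (Subs \<times> {..<m}) = S.G" by (simp add: S.G_def S.KK_def)
  then show ?thesis using S.main by simp
qed

end
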